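(* Let $n\geq5$ and $0\leq i\leq 2n-1$, and let $\mathcal{C}_\mu$ be a random maximal chain of $\{0,1,2\}^n$ distributed according to $\mu$. If $x\in L_i$ and $y\in L_{i+1}$ with $x<y$, then \[\mathbb{P}\left(y\in \mathcal{C}_\mu\mid x\in\mathcal{C}_\mu\right) \leq \begin{cases} \dfrac{2|L_i|}{(i+1)|L_{i+1}|} & \text{if }i\leq n-1, \\[2mm] \dfrac{2}{2n-i} & \text{otherwise.}\end{cases}\]
   Context: $\{0,1,2\}^n$ is ordered coordinatewise. $L_i$ is the set of vectors with coordinate sum $i$; $L_i^s$ those elements of $L_i$ with exactly $s$ coordinates equal to $2$; $L_i^{\geq s}=\bigcup_{r\geq s}L_i^r$, $L_i^{\leq s}=\bigcup_{r\leq s}L_i^r$. Define, for $0\le i\le 2n-1$ and $\max\{0,i-n\}\leq s\leq \lfloor (i-1)/2\rfloor$, \[w_{i,s}=\frac{|L_i||L_{i+1}^{\geq s+1}| - |L_{i+1}||L_i^{\geq s+1}|}{|L_i^s||L_i||L_{i+1}|(i-2s)},\] and for $\max\{0,i-n+1\}\leq s\leq \lfloor i/2\rfloor$, \[w_{i,s}'=\frac{|L_i||L_{i+1}^{\leq s}| - |L_{i+1}||L_i^{\leq s-1}|}{|L_i^s||L_i||L_{i+1}|(n-i+s)};\] if $i$ is even set $w_{i,i/2}=0$, and if $i\geq n$ set $w'_{i,i-n}=0$. The distribution $\mu$ is that of the set of states visited by the Markov process that starts at $(0,\dots,0)$ and, for $i=0,\dots,2n-1$, from the current element $x\in L_i^s$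 moves to $y\in L_{i+1}$ with $x<y$ with probability $|L_i|w_{i,s}$ if $y\in L_{i+1}^{s+1}$ and $|L_i|w'_{i,s}$ if $y\in L_{i+1}^{s}$ (these are nonnegative and sum to $1$). *)

theory Defs
  imports Complex_Main
begin

text \<open>Elements of the grid {0,1,2}^n are represented as functions nat => nat that
  vanish outside {0..<n}; the library's pointwise order on functions is the
  coordinatewise order.\<close>

definition cube :: "nat \<Rightarrow> (nat \<Rightarrow> nat) set" where
  "cube n = {x. (\<forall>k<n. x k \<le> 2) \<and> (\<forall>k\<ge>n. x k = 0)}"

definition twos :: "nat \<Rightarrow> (nat \<Rightarrow> nat) \<Rightarrow> nat" where
  "twos n x = card {k. k < n \<and> x k = 2}"

definition lev :: "nat \<Rightarrow> nat \<Rightarrow> (nat \<Rightarrow> nat) set" where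
  "lev n i = {x \<in> cube n. (\<Sum>k<n. x k) = i}"

definition levs :: "nat \<Rightarrow> nat \<Rightarrow> nat \<Rightarrow> (nat \<Rightarrow> nat) set" where
  "levs n i s = {x \<in> lev n i. twos n x = s}"

definition levs_ge :: "nat \<Rightarrow> nat \<Rightarrow> nat \<Rightarrow> (nat \<Rightarrow> nat) set" where
  "levs_ge n i s = {x \<in> lev n i. twos n x \<ge> s}"

definition levs_le :: "nat \<Rightarrow> nat \<Rightarrow> nat \<Rightarrow> (nat \<Rightarrow> nat) set" where
  "levs_le n i s = {x \<in> lev n i. twos n x \<le> s}"

definition wt :: "nat \<Rightarrow> nat \<Rightarrow> nat \<Rightarrow> real" where
  "wt n i s = (if 2 * s = i then 0 else
     (real (card (lev n i)) * real (card (levs_ge n (i+1) (s+1)))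
       - real (card (lev n (i+1))) * real (card (levs_ge n i (s+1))))
     / (real (card (levs n i s)) * real (card (lev n i)) * real (card (lev n (i+1)))
        * (real i - 2 * real s)))"

definition wt' :: "nat \<Rightarrow> nat \<Rightarrow> nat \<Rightarrow> real" where
  "wt' n i s = (if n \<le> i \<and> s = i - n then 0 else
     (real (card (lev n i)) * real (card (levs_le n (i+1) s))
       - real (card (lev n (i+1))) * (if s = 0 then 0 else real (card (levs_le n i (s - 1)))))
     / (real (card (levs n i s)) * real (card (lev n i)) * real (card (lev n (i+1)))
        * (real n - real i + real s)))"

definition trans_prob :: "nat \<Rightarrow> nat \<Rightarrow> (nat \<Rightarrow> nat) \<Rightarrow> (nat \<Rightarrow> nat) \<Rightarrow> real" where
  "trans_prob n i x y =
     (if x \<in> lev n i \<and> y \<in> lev n (i+1) \<and> x < y then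
        (if twos n y = twos n x + 1 then real (card (lev n i)) * wt n i (twos n x)
         else real (card (lev n i)) * wt' n i (twos n x))
      else 0)"

definition max_chains :: "nat \<Rightarrow> (nat \<Rightarrow> nat) list set" where
  "max_chains n = {c. length c = 2 * n + 1 \<and> (\<forall>j\<le>2*n. c ! j \<in> lev n j)
                       \<and> (\<forall>j<2*n. c ! j < c ! (j+1))}"

text \<open>Probability under mu of a maximal chain: probability that the process visits
  exactly this sequence of states (it starts at the zero vector).\<close>
definition mu_chain :: "nat \<Rightarrow> (nat \<Rightarrow> nat) list \<Rightarrow> real" where
  "mu_chain n c = (\<Prod>j<2*n. trans_prob n j (c ! j) (c ! (j+1)))"

definition mu_prob :: "nat \<Rightarrow> ((nat \<Rightarrow> nat) list \<Rightarrow> bool) \<Rightarrow> real" where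
  "mu_prob n P = (\<Sum>c\<in>{c \<in> max_chains n. P c}. mu_chain n c)"

definition mu_cond :: "nat \<Rightarrow> (nat \<Rightarrow> nat) \<Rightarrow> (nat \<Rightarrow> nat) \<Rightarrow> real" where
  "mu_cond n y x = mu_prob n (\<lambda>c. y \<in> set c \<and> x \<in> set c) / mu_prob n (\<lambda>c. x \<in> set c)"

end

theory Submission
  imports Defs
begin



lemma concave_quad:
  fixes \<alpha> \<beta> \<gamma> p q x :: real
  assumes "\<alpha> \<le> 0" "p \<le> x" "x \<le> q" "\<alpha>*p^2+\<beta>*p+\<gamma> \<ge> 0" "\<alpha>*q^2+\<beta>*q+\<gamma> \<ge> 0"
  shows "\<alpha>*x^2+\<beta>*x+\<gamma> \<ge> 0"
proof -
  have id: "(q-p)*(\<alpha>*x^2+\<beta>*x+\<gamma>) = (q-x)*(\<alpha>*p^2+\<beta>*p+\<gamma>) + (x-p)*(\<alpha>*q^2+\<beta>*q+\<gamma>) - \<alpha>*(x-p)*(q-x)*(q-p)"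
    by (simp add: algebra_simps power2_eq_square)
  have "(q-x)*(\<alpha>*p^2+\<beta>*p+\<gamma>) \<ge> 0" using assms by simp
  moreover have "(x-p)*(\<alpha>*q^2+\<beta>*q+\<gamma>) \<ge> 0" using assms by simp
  moreover have "\<alpha>*(x-p)*(q-x)*(q-p) \<le> 0"
  proof -
    have "(x-p)*(q-x)*(q-p) \<ge> 0" using assms by simp
    then have "\<alpha>*((x-p)*(q-x)*(q-p)) \<le> 0" using assms(1) by (simp add: mult_nonpos_nonneg)
    then show ?thesis by (simp add: mult.assoc)
  qed
  ultimately have "(q-p)*(\<alpha>*x^2+\<beta>*x+\<gamma>) \<ge> 0" using id by linarith
  show ?thesis
  proof (cases "p = q")
    case True then have "x = q" using assms by simp
    then show ?thesis using assms by simp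
  next
    case False then have "q - p > 0" using assms by simp
    then show ?thesis using \<open>(q-p)*(\<alpha>*x^2+\<beta>*x+\<gamma>) \<ge> 0\<close> by (simp add: zero_le_mult_iff)
  qed
qed

lemma tele_down:
  fixes \<phi> :: "nat \<Rightarrow> real"
  assumes "p \<le> q" "\<And>v. p \<le> v \<Longrightarrow> v < q \<Longrightarrow> \<phi> (Suc v) \<le> \<phi> v"
  shows "\<phi> q \<le> \<phi> p"
  using assms
proof (induction q rule: dec_induct)
  case base then show ?case by simp
next
  case (step m)
  then have "\<phi> (Suc m) \<le> \<phi> m" by simp
  moreover have "\<phi> m \<le> \<phi> p" using step by simp
  ultimately show ?case by simp
qed

lemma tele_up:
  fixes \<phi> :: "nat \<Rightarrow> real"
  assumes "p \<le> q" "\<And>v. p \<le> v \<Longrightarrow> v < q \<Longrightarrow> \<phi> v \<le> \<phi> (Suc v)"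
  shows "\<phi> p \<le> \<phi> q"
  using tele_down[of p q "\<lambda>v. - \<phi> v"] assms by simp

lemma discrete_min:
  fixes \<phi> k c :: "nat \<Rightarrow> real"
  assumes "l \<le> u" "u \<le> r" "\<phi> l \<ge> 0" "\<phi> r \<ge> 0"
    and step: "\<And>v. l \<le> v \<Longrightarrow> v < r \<Longrightarrow> \<phi> v - \<phi> (Suc v) = c v * k v"
    and cnn: "\<And>v. l \<le> v \<Longrightarrow> v < r \<Longrightarrow> c v \<ge> 0"
    and interval: "\<And>p v q. l \<le> p \<Longrightarrow> p \<le> v \<Longrightarrow> v \<le> q \<Longrightarrow> q < r \<Longrightarrow> k p \<ge> 0 \<Longrightarrow> k q \<ge> 0 \<Longrightarrow> k v \<ge> 0"
    and last: "l + 2 \<le> r \<Longrightarrow> k (r - 1) \<ge> 0"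
  shows "\<phi> u \<ge> 0"
proof (cases "u = l \<or> u = r")
  case True then show ?thesis using assms by auto
next
  case False
  then have lu: "l < u" "u < r" using assms by auto
  then have kr: "k (r - 1) \<ge> 0" using last by simp
  show ?thesis
  proof (cases "k u \<ge> 0")
    case True
    have "\<phi> r \<le> \<phi> u"
    proof (rule tele_down)
      show "u \<le> r" using lu by simp
      fix v assume v: "u \<le> v" "v < r"
      have "k v \<ge> 0" using interval[of u v "r-1"] True kr v lu by simp
      then have "c v * k v \<ge> 0" using cnn[of v] v lu by simp
      then show "\<phi> (Suc v) \<le> \<phi> v" using step[of v] v lu by simp
    qed
    then show ?thesis using assms by simp
  next
    case False
    have "\<phi> l \<le> \<phi> u"
    proof (rule tele_up)
      show "l \<le> u" using lu by simp
      fix v assume v: "l \<le> v" "v < u"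
      have "\<not> k v \<ge> 0"
      proof
        assume "k v \<ge> 0"
        then have "k u \<ge> 0" using interval[of v u "r-1"] kr v lu by simp
        then show False using False by simp
      qed
      then have "c v * k v \<le> 0" using cnn[of v] v lu by (simp add: mult_nonneg_nonpos)
      then show "\<phi> v \<le> \<phi> (Suc v)" using step[of v] v lu by simp
    qed
    then show ?thesis using assms by simp
  qed
qed




lemma sum_split_ivl:
  fixes f :: "nat \<Rightarrow> real"
  assumes "m \<le> Suc s" "s \<le> K"
  shows "(\<Sum>r=m..K. f r) = (\<Sum>r=m..s. f r) + (\<Sum>r=Suc s..K. f r)"
proof -
  have "{m..K} = {m..s} \<union> {Suc s..K}" using assms by auto
  moreover have "{m..s} \<inter> {Suc s..K} = {}" by auto
  ultimately show ?thesis by (simp add: sum.union_disjoint)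
qed

lemma cancel_helper:
  fixes A N x B d :: real
  assumes "A \<noteq> 0" "d \<noteq> 0" "x \<noteq> 0" "B \<noteq> 0"
  shows "A * ((N / (x * A * B * d)) * d) = N / (x * B)"
  using assms by (simp add: field_simps)

locale seqs =
  fixes n i K :: nat and a b :: "nat \<Rightarrow> real"
  assumes K: "i + 2 \<le> 2*K"
  and a_nn: "\<And>r. a r \<ge> 0" and b_nn: "\<And>r. b r \<ge> 0"
  and a_sup1: "\<And>r. i < 2*r \<Longrightarrow> a r = 0" and a_sup2: "\<And>r. n + r < i \<Longrightarrow> a r = 0"
  and b_sup1: "\<And>r. i + 1 < 2*r \<Longrightarrow> b r = 0" and b_sup2: "\<And>r. n + r < i + 1 \<Longrightarrow> b r = 0"
  and R1: "\<And>s. a s * (real i - 2*real s) = (real s + 1) * b (Suc s)"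
  and R2: "\<And>s. a s * (real n - real i + real s) = (real i + 1 - 2*real s) * b s"
begin

definition "A = (\<Sum>r=0..K. a r)"
definition "B = (\<Sum>r=0..K. b r)"
definition "Sa = (\<Sum>r=0..K. real r * a r)"
definition "Sb = (\<Sum>r=0..K. real r * b r)"
definition "At s = (\<Sum>r=s..K. a r)"
definition "Bt s = (\<Sum>r=s..K. b r)"
definition "Dd s = A * (\<Sum>r=Suc s..K. real r * a r) - Sa * At (Suc s)"
definition "Ee s = B * (\<Sum>r=Suc s..K. real r * b r) - Sb * Bt (Suc s)"

lemma aK: "a r = 0" if "K \<le> r" using a_sup1[of r] K that by simp
lemma bK: "b r = 0" if "K \<le> r" using b_sup1[of r] K that by simp

lemma A_nn: "A \<ge> 0" unfolding A_def by (simp add: sum_nonneg a_nn)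
lemma B_nn: "B \<ge> 0" unfolding B_def by (simp add: sum_nonneg b_nn)

lemma tailA_aux:
  assumes "s \<le> m"
  shows "(real i + 1) * (\<Sum>r=Suc s..m. b r) = (\<Sum>r=Suc s..m. a r * (real n + real i - 3*real r))
           + 2 * a s * (real i - 2*real s) - 2 * a m * (real i - 2*real m)"
  using assms
proof (induction m rule: dec_induct)
  case base then show ?case by simp
next
  case (step m)
  have r1: "a m * (real i - 2*real m) = (real m + 1) * b (Suc m)" by (rule R1)
  have r2: "a (Suc m) * (real n - real i + real (Suc m)) = (real i + 1 - 2*real (Suc m)) * b (Suc m)" by (rule R2)
  have "(real i + 1) * (\<Sum>r=Suc s..Suc m. b r) = (real i + 1) * (\<Sum>r=Suc s..m. b r) + (real i + 1) * b (Suc m)"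
    using step by (simp add: sum.cl_ivl_Suc algebra_simps)
  also have "\<dots> = (\<Sum>r=Suc s..m. a r * (real n + real i - 3*real r))
           + 2 * a s * (real i - 2*real s) - 2 * a m * (real i - 2*real m) + (real i + 1) * b (Suc m)"
    using step by simp
  also have "\<dots> = (\<Sum>r=Suc s..Suc m. a r * (real n + real i - 3*real r))
           + 2 * a s * (real i - 2*real s) - 2 * a (Suc m) * (real i - 2*real (Suc m))"
    using step r1 r2 by (simp add: sum.cl_ivl_Suc algebra_simps)
  finally show ?case .
qed

lemma tailA:
  "(real i + 1) * Bt (Suc s) = (\<Sum>r=Suc s..K. a r * (real n + real i - 3*real r)) + 2 * a s * (real i - 2*real s)"
proof (cases "s \<le> K")
  case True
  then show ?thesis using tailA_aux[of s K] aK[of K] unfolding Bt_def by simp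
next
  case False
  then show ?thesis using aK[of s] unfolding Bt_def by simp
qed

lemma E1: "(real i + 1) * B = (real n + real i) * A - 3 * Sa"
proof -
  have B: "B = b 0 + Bt 1" unfolding B_def Bt_def using K by (simp add: sum.atLeast_Suc_atMost)
  have r2: "(real i + 1) * b 0 = a 0 * (real n - real i)" using R2[of 0] by simp
  have t: "(real i + 1) * Bt 1 = (\<Sum>r=1..K. a r * (real n + real i - 3*real r)) + 2 * a 0 * real i"
    using tailA[of 0] by simp
  have "(\<Sum>r=0..K. a r * (real n + real i - 3*real r)) = a 0 * (real n + real i) + (\<Sum>r=1..K. a r * (real n + real i - 3*real r))"
    using K by (simp add: sum.atLeast_Suc_atMost)
  moreover have "(\<Sum>r=0..K. a r * (real n + real i - 3*real r)) = (real n + real i) * A - 3 * Sa"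
    unfolding A_def Sa_def by (simp add: algebra_simps sum_subtractf sum_distrib_left sum_distrib_right)
  ultimately show ?thesis using B r2 t by (simp add: algebra_simps)
qed

lemma Fid1: "(real i + 1) * (A * Bt (Suc s) - B * At (Suc s)) = 2 * A * a s * (real i - 2*real s) - 3 * Dd s"
proof -
  have "(\<Sum>r=Suc s..K. a r * (real n + real i - 3*real r)) = (real n + real i) * At (Suc s) - 3 * (\<Sum>r=Suc s..K. real r * a r)"
    unfolding At_def by (simp add: algebra_simps sum_subtractf sum_distrib_left sum_distrib_right)
  then have "(real i + 1) * Bt (Suc s) = (real n + real i) * At (Suc s) - 3 * (\<Sum>r=Suc s..K. real r * a r) + 2 * a s * (real i - 2*real s)"
    using tailA[of s] by simp
  note X = this
  have "(real i + 1) * (A * Bt (Suc s) - B * At (Suc s)) = A * ((real i + 1) * Bt (Suc s)) - ((real i + 1) * B) * At (Suc s)"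
    by (simp add: algebra_simps)
  also have "\<dots> = A * ((real n + real i) * At (Suc s) - 3 * (\<Sum>r=Suc s..K. real r * a r) + 2 * a s * (real i - 2*real s))
      - ((real n + real i) * A - 3 * Sa) * At (Suc s)" using X E1 by simp
  also have "\<dots> = 2 * A * a s * (real i - 2*real s) - 3 * Dd s" unfolding Dd_def by (simp add: algebra_simps)
  finally show ?thesis .
qed

lemma Dd_nn: "Dd s \<ge> 0"
proof (cases "s < K")
  case False
  then have "{Suc s..K} = {}" by auto
  then show ?thesis unfolding Dd_def At_def by simp
next
  case True
  define Alo where "Alo = (\<Sum>r=0..s. a r)"
  define Slo where "Slo = (\<Sum>r=0..s. real r * a r)"
  define St where "St = (\<Sum>r=Suc s..K. real r * a r)"
  have A: "A = Alo + At (Suc s)" unfolding A_def Alo_def At_def using sum_split_ivl[of 0 s K] True by simp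
  have S: "Sa = Slo + St" unfolding Sa_def Slo_def St_def using sum_split_ivl[of 0 s K] True by simp
  have h1: "Slo \<le> real s * Alo" unfolding Slo_def Alo_def sum_distrib_left
    by (rule sum_mono) (simp add: a_nn mult_right_mono)
  have h2: "St \<ge> (real s + 1) * At (Suc s)" unfolding St_def At_def sum_distrib_left
    by (rule sum_mono) (simp add: a_nn mult_right_mono)
  have h3: "Alo \<ge> 0" unfolding Alo_def by (simp add: sum_nonneg a_nn)
  have h4: "At (Suc s) \<ge> 0" unfolding At_def by (simp add: sum_nonneg a_nn)
  have "Dd s = Alo * (St - (real s + 1) * At (Suc s)) + At (Suc s) * (real s * Alo - Slo) + Alo * At (Suc s)"
    unfolding Dd_def using A S St_def by (simp add: algebra_simps)
  moreover have "Alo * (St - (real s + 1) * At (Suc s)) \<ge> 0" using h2 h3 by simp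
  moreover have "At (Suc s) * (real s * Alo - Slo) \<ge> 0" using h1 h4 by simp
  moreover have "Alo * At (Suc s) \<ge> 0" using h3 h4 by simp
  ultimately show ?thesis by linarith
qed


lemma termB: "(2*real n - real i) * a t = 2 * (real i + 1 - 2*real t) * b t + (real t + 1) * b (Suc t)"
proof -
  have "(2*real n - real i) * a t = 2 * (a t * (real n - real i + real t)) + a t * (real i - 2*real t)"
    by (simp add: algebra_simps)
  then show ?thesis using R1[of t] R2[of t] by simp
qed

lemma tailB_aux:
  assumes "s \<le> m"
  shows "(2*real n - real i) * (\<Sum>r=s..m. a r) = (\<Sum>r=s..m. b r * (2*real i + 2 - 3*real r))
           - real s * b s + (real m + 1) * b (Suc m)"
  using assms
proof (induction m rule: dec_induct)
  case base then show ?case using termB[of s] by (simp add: algebra_simps)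
next
  case (step m)
  have "(2*real n - real i) * (\<Sum>r=s..Suc m. a r) = (2*real n - real i) * (\<Sum>r=s..m. a r) + (2*real n - real i) * a (Suc m)"
    using step by (simp add: sum.cl_ivl_Suc algebra_simps)
  also have "\<dots> = (\<Sum>r=s..m. b r * (2*real i + 2 - 3*real r))
           - real s * b s + (real m + 1) * b (Suc m) + (2*real n - real i) * a (Suc m)"
    using step by simp
  also have "\<dots> = (\<Sum>r=s..Suc m. b r * (2*real i + 2 - 3*real r))
           - real s * b s + (real (Suc m) + 1) * b (Suc (Suc m))"
    using step termB[of "Suc m"] by (simp add: sum.cl_ivl_Suc algebra_simps)
  finally show ?case .
qed

lemma tailB: "(2*real n - real i) * At s = (\<Sum>r=s..K. b r * (2*real i + 2 - 3*real r)) - real s * b s"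
proof (cases "s \<le> K")
  case True
  then show ?thesis using tailB_aux[of s K] bK[of "Suc K"] unfolding At_def by simp
next
  case False
  then show ?thesis using bK[of s] unfolding At_def by simp
qed

lemma E2: "(2*real n - real i) * A = 2 * (real i + 1) * B - 3 * Sb"
proof -
  have "(2*real n - real i) * A = (\<Sum>r=0..K. b r * (2*real i + 2 - 3*real r))"
    using tailB[of 0] unfolding A_def At_def by simp
  also have "\<dots> = 2 * (real i + 1) * B - 3 * Sb"
    unfolding B_def Sb_def by (simp add: algebra_simps sum_subtractf sum_distrib_left sum_distrib_right sum.distrib)
  finally show ?thesis .
qed

lemma Fid2: "(2*real n - real i) * (A * Bt (Suc s) - B * At (Suc s)) = 3 * Ee s + B * (real s + 1) * b (Suc s)"
proof -
  have "(\<Sum>r=Suc s..K. b r * (2*real i + 2 - 3*real r)) = 2 * (real i + 1) * Bt (Suc s) - 3 * (\<Sum>r=Suc s..K. real r * b r)"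
    unfolding Bt_def by (simp add: algebra_simps sum_subtractf sum_distrib_left sum_distrib_right sum.distrib)
  then have X: "(2*real n - real i) * At (Suc s) = 2 * (real i + 1) * Bt (Suc s) - 3 * (\<Sum>r=Suc s..K. real r * b r) - (real s + 1) * b (Suc s)"
    using tailB[of "Suc s"] by simp
  have "(2*real n - real i) * (A * Bt (Suc s) - B * At (Suc s)) = ((2*real n - real i) * A) * Bt (Suc s) - B * ((2*real n - real i) * At (Suc s))"
    by (simp add: algebra_simps)
  also have "\<dots> = (2 * (real i + 1) * B - 3 * Sb) * Bt (Suc s) - B * (2 * (real i + 1) * Bt (Suc s) - 3 * (\<Sum>r=Suc s..K. real r * b r) - (real s + 1) * b (Suc s))"
    using X E2 by simp
  also have "\<dots> = 3 * Ee s + B * (real s + 1) * b (Suc s)" unfolding Ee_def by (simp add: algebra_simps)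
  finally show ?thesis .
qed

lemma Ee_nn: "Ee s \<ge> 0"
proof (cases "s < K")
  case False
  then have "{Suc s..K} = {}" by auto
  then show ?thesis unfolding Ee_def Bt_def by simp
next
  case True
  define Alo where "Alo = (\<Sum>r=0..s. b r)"
  define Slo where "Slo = (\<Sum>r=0..s. real r * b r)"
  define St where "St = (\<Sum>r=Suc s..K. real r * b r)"
  have A: "B = Alo + Bt (Suc s)" unfolding B_def Alo_def Bt_def using sum_split_ivl[of 0 s K] True by simp
  have S: "Sb = Slo + St" unfolding Sb_def Slo_def St_def using sum_split_ivl[of 0 s K] True by simp
  have h1: "Slo \<le> real s * Alo" unfolding Slo_def Alo_def sum_distrib_left
    by (rule sum_mono) (simp add: b_nn mult_right_mono)
  have h2: "St \<ge> (real s + 1) * Bt (Suc s)" unfolding St_def Bt_def sum_distrib_left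
    by (rule sum_mono) (simp add: b_nn mult_right_mono)
  have h3: "Alo \<ge> 0" unfolding Alo_def by (simp add: sum_nonneg b_nn)
  have h4: "Bt (Suc s) \<ge> 0" unfolding Bt_def by (simp add: sum_nonneg b_nn)
  have "Ee s = Alo * (St - (real s + 1) * Bt (Suc s)) + Bt (Suc s) * (real s * Alo - Slo) + Alo * Bt (Suc s)"
    unfolding Ee_def using A S St_def by (simp add: algebra_simps)
  moreover have "Alo * (St - (real s + 1) * Bt (Suc s)) \<ge> 0" using h2 h3 by simp
  moreover have "Bt (Suc s) * (real s * Alo - Slo) \<ge> 0" using h1 h4 by simp
  moreover have "Alo * Bt (Suc s) \<ge> 0" using h3 h4 by simp
  ultimately show ?thesis by linarith
qed

lemma ratio_a: "(real v + 1) * (real n - real i + real v + 1) * a (Suc v) = (real i - 2*real v) * (real i - 2*real v - 1) * a v"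
proof -
  have r1: "a v * (real i - 2*real v) = (real v + 1) * b (Suc v)" by (rule R1)
  have r2: "a (Suc v) * (real n - real i + real v + 1) = (real i - 2*real v - 1) * b (Suc v)"
    using R2[of "Suc v"] by (simp add: algebra_simps)
  have "(real v + 1) * (real n - real i + real v + 1) * a (Suc v) = (real v + 1) * (a (Suc v) * (real n - real i + real v + 1))"
    by (simp add: algebra_simps)
  also have "\<dots> = (real v + 1) * ((real i - 2*real v - 1) * b (Suc v))" by (simp only: r2)
  also have "\<dots> = (real i - 2*real v - 1) * ((real v + 1) * b (Suc v))" by (simp add: algebra_simps)
  also have "\<dots> = (real i - 2*real v - 1) * (a v * (real i - 2*real v))" by (simp only: r1)
  also have "\<dots> = (real i - 2*real v) * (real i - 2*real v - 1) * a v" by (simp add: algebra_simps)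
  finally show ?thesis .
qed

lemma ratio_b: "(real n - real i + real u) * (real u + 1) * b (Suc u) = (real i + 1 - 2*real u) * (real i - 2*real u) * b u"
proof -
  have r1: "a u * (real i - 2*real u) = (real u + 1) * b (Suc u)" by (rule R1)
  have r2: "a u * (real n - real i + real u) = (real i + 1 - 2*real u) * b u" by (rule R2)
  have "(real n - real i + real u) * (real u + 1) * b (Suc u) = (real n - real i + real u) * ((real u + 1) * b (Suc u))"
    by (simp add: algebra_simps)
  also have "\<dots> = (real n - real i + real u) * (a u * (real i - 2*real u))" by (simp only: r1)
  also have "\<dots> = (real i - 2*real u) * (a u * (real n - real i + real u))" by (simp add: algebra_simps)
  also have "\<dots> = (real i - 2*real u) * ((real i + 1 - 2*real u) * b u)" by (simp only: r2)
  also have "\<dots> = (real i + 1 - 2*real u) * (real i - 2*real u) * b u" by (simp add: algebra_simps)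
  finally show ?thesis .
qed

lemma K_pos: "K = Suc (K - 1)" using K by simp

lemma stein_a: "(\<Sum>v=0..K. a v * (real v * (real n - real i + real v) - (real i - 2*real v) * (real i - 2*real v - 1))) = 0"
proof -
  obtain K' where K': "K = Suc K'" using K_pos by blast
  have "(\<Sum>v=0..K. real v * (real n - real i + real v) * a v) = (\<Sum>v=0..K'. (real v + 1) * (real n - real i + real v + 1) * a (Suc v))"
    unfolding K' by (subst sum.atLeast0_atMost_Suc_shift) (simp add: algebra_simps)
  also have "\<dots> = (\<Sum>v=0..K'. (real i - 2*real v) * (real i - 2*real v - 1) * a v)"
    using ratio_a by simp
  also have "\<dots> = (\<Sum>v=0..K. (real i - 2*real v) * (real i - 2*real v - 1) * a v)"
    unfolding K' using aK[of "Suc K'"] K' by simp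
  finally have E: "(\<Sum>v=0..K. real v * (real n - real i + real v) * a v) = (\<Sum>v=0..K. (real i - 2*real v) * (real i - 2*real v - 1) * a v)" .
  have "(\<Sum>v=0..K. a v * (real v * (real n - real i + real v) - (real i - 2*real v) * (real i - 2*real v - 1)))
     = (\<Sum>v=0..K. real v * (real n - real i + real v) * a v - (real i - 2*real v) * (real i - 2*real v - 1) * a v)"
    by (rule sum.cong) (simp_all add: algebra_simps)
  also have "\<dots> = 0" using E by (simp only: sum_subtractf)
  finally show ?thesis .
qed

lemma stein_b: "(\<Sum>u=0..K. b u * (real u * (real n - real i - 1 + real u) - (real i + 1 - 2*real u) * (real i - 2*real u))) = 0"
proof -
  obtain K' where K': "K = Suc K'" using K_pos by blast
  have "(\<Sum>u=0..K. real u * (real n - real i - 1 + real u) * b u) = (\<Sum>u=0..K'. (real n - real i + real u) * (real u + 1) * b (Suc u))"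
    unfolding K' by (subst sum.atLeast0_atMost_Suc_shift) (simp add: algebra_simps)
  also have "\<dots> = (\<Sum>u=0..K'. (real i + 1 - 2*real u) * (real i - 2*real u) * b u)"
    using ratio_b by simp
  also have "\<dots> = (\<Sum>u=0..K. (real i + 1 - 2*real u) * (real i - 2*real u) * b u)"
    unfolding K' using bK[of "Suc K'"] K' by simp
  finally have E: "(\<Sum>u=0..K. real u * (real n - real i - 1 + real u) * b u) = (\<Sum>u=0..K. (real i + 1 - 2*real u) * (real i - 2*real u) * b u)" .
  have "(\<Sum>u=0..K. b u * (real u * (real n - real i - 1 + real u) - (real i + 1 - 2*real u) * (real i - 2*real u)))
     = (\<Sum>u=0..K. real u * (real n - real i - 1 + real u) * b u - (real i + 1 - 2*real u) * (real i - 2*real u) * b u)"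
    by (rule sum.cong) (simp_all add: algebra_simps)
  also have "\<dots> = 0" using E by (simp only: sum_subtractf)
  finally show ?thesis .
qed

lemma cauchy:
  fixes w :: "nat \<Rightarrow> real"
  assumes "\<And>r. w r \<ge> 0"
  shows "(\<Sum>r=0..K. real r * w r)^2 \<le> (\<Sum>r=0..K. w r) * (\<Sum>r=0..K. real r^2 * w r)"
proof -
  define W where "W = (\<Sum>r=0..K. w r)"
  define S where "S = (\<Sum>r=0..K. real r * w r)"
  define S2 where "S2 = (\<Sum>r=0..K. real r^2 * w r)"
  have W: "W \<ge> 0" unfolding W_def using assms by (simp add: sum_nonneg)
  have "0 \<le> (\<Sum>r=0..K. w r * (W * real r - S)^2)" using assms by (simp add: sum_nonneg)
  also have "\<dots> = (\<Sum>r=0..K. W^2*(real r^2*w r) - 2*W*S*(real r*w r) + S^2*w r)"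
    by (rule sum.cong) (simp_all add: power2_eq_square algebra_simps)
  also have "\<dots> = W^2 * S2 - 2 * W * S * S + S^2 * W"
    by (simp only: sum.distrib sum_subtractf flip: sum_distrib_left S_def S2_def W_def)
  finally have "W * (W * S2 - S^2) \<ge> 0" by (simp add: power2_eq_square algebra_simps)
  then show ?thesis
  proof (cases "W = 0")
    case True
    then have "\<And>r. r \<in> {0..K} \<Longrightarrow> w r = 0" using assms unfolding W_def by (simp add: sum_nonneg_eq_0_iff)
    then have "S = 0" unfolding S_def by simp
    then show ?thesis using True unfolding S_def W_def S2_def by simp
  next
    case False
    then have "W * S2 - S^2 \<ge> 0" using W \<open>W * (W * S2 - S^2) \<ge> 0\<close> by (simp add: zero_le_mult_iff)
    then show ?thesis unfolding W_def S_def S2_def by simp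
  qed
qed

lemma mean_a:
  assumes "A > 0" "i < n"
  shows "3 * Sa \<ge> A * (2*real i - real n)"
proof (rule ccontr)
  assume H: "\<not> ?thesis"
  define S2 where "S2 = (\<Sum>r=0..K. real r^2 * a r)"
  have st: "-3 * S2 + (real n + 3*real i - 2) * Sa - real i * (real i - 1) * A = 0"
  proof -
    have "(\<Sum>v=0..K. a v * (real v * (real n - real i + real v) - (real i - 2*real v) * (real i - 2*real v - 1)))
       = (\<Sum>v=0..K. (-3)*(real v^2 * a v) + (real n + 3*real i - 2)*(real v * a v) - (real i * (real i - 1)) * a v)"
      by (rule sum.cong) (simp_all add: power2_eq_square algebra_simps)
    also have "\<dots> = -3 * S2 + (real n + 3*real i - 2) * Sa - real i * (real i - 1) * A"
      by (simp only: sum.distrib sum_subtractf flip: sum_distrib_left S2_def Sa_def A_def)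
    finally show ?thesis using stein_a by simp
  qed
  have c: "Sa^2 \<le> A * S2" using cauchy[of a] a_nn unfolding Sa_def A_def S2_def by simp
  define x where "x = Sa"
  define y where "y = A"
  define x0 where "x0 = (2*real i - real n) * y / 3"
  have q: "3*x^2 - (real n + 3*real i - 2)*x*y + real i*(real i - 1)*y^2 \<le> 0"
  proof -
    have "3*x^2 \<le> 3 * (A * S2)" using c x_def by simp
    also have "3 * (A * S2) = A * ((real n + 3*real i - 2) * Sa - real i * (real i - 1) * A)" using st by (simp add: algebra_simps)
    finally show ?thesis unfolding x_def y_def by (simp add: power2_eq_square algebra_simps)
  qed
  have idq: "3*x^2 - (real n + 3*real i - 2)*x*y + real i*(real i - 1)*y^2
      = (x - x0) * (3*x + 3*x0 - (real n + 3*real i - 2)*y) + y^2 * (2*real n - real i) * (real n - real i - 1) / 3"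
    unfolding x0_def by (simp add: power2_eq_square field_simps)
  have h1: "x - x0 < 0" using H unfolding x_def x0_def y_def by (simp add: algebra_simps)
  have h2: "3*x + 3*x0 - (real n + 3*real i - 2)*y < 0"
  proof -
    have "3*x < (2*real i - real n) * y" using H unfolding x_def y_def by (simp add: algebra_simps)
    moreover have "(real i - 3*real n + 2) * y \<le> 0" using assms unfolding y_def
      by (intro mult_nonpos_nonneg) auto
    ultimately show ?thesis unfolding x0_def by (simp add: field_simps)
  qed
  have "(x - x0) * (3*x + 3*x0 - (real n + 3*real i - 2)*y) > 0" using h1 h2 by (simp add: mult_neg_neg)
  moreover have "y^2 * (2*real n - real i) * (real n - real i - 1) / 3 \<ge> 0" using assms by simp
  ultimately show False using q idq by linarith
qed

lemma mean_b:
  assumes "B > 0" "n \<le> i" "1 \<le> n"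
  shows "3 * Sb \<ge> (real i + 1) * B"
proof (rule ccontr)
  assume H: "\<not> ?thesis"
  define S2 where "S2 = (\<Sum>r=0..K. real r^2 * b r)"
  have st: "-3 * S2 + (real n + 3*real i + 1) * Sb - real i * (real i + 1) * B = 0"
  proof -
    have "(\<Sum>u=0..K. b u * (real u * (real n - real i - 1 + real u) - (real i + 1 - 2*real u) * (real i - 2*real u)))
       = (\<Sum>v=0..K. (-3)*(real v^2 * b v) + (real n + 3*real i + 1)*(real v * b v) - (real i * (real i + 1)) * b v)"
      by (rule sum.cong) (simp_all add: power2_eq_square algebra_simps)
    also have "\<dots> = -3 * S2 + (real n + 3*real i + 1) * Sb - real i * (real i + 1) * B"
      by (simp only: sum.distrib sum_subtractf flip: sum_distrib_left S2_def Sb_def B_def)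
    finally show ?thesis using stein_b by simp
  qed
  have c: "Sb^2 \<le> B * S2" using cauchy[of b] b_nn unfolding Sb_def B_def S2_def by simp
  define x where "x = Sb"
  define y where "y = B"
  define x0 where "x0 = (real i + 1) * y / 3"
  have q: "3*x^2 - (real n + 3*real i + 1)*x*y + real i*(real i + 1)*y^2 \<le> 0"
  proof -
    have "3*x^2 \<le> 3 * (B * S2)" using c x_def by simp
    also have "3 * (B * S2) = B * ((real n + 3*real i + 1) * Sb - real i * (real i + 1) * B)" using st by (simp add: algebra_simps)
    finally show ?thesis unfolding x_def y_def by (simp add: power2_eq_square algebra_simps)
  qed
  have idq: "3*x^2 - (real n + 3*real i + 1)*x*y + real i*(real i + 1)*y^2
      = (x - x0) * (3*x + 3*x0 - (real n + 3*real i + 1)*y) + y^2 * (real i + 1) * (real i - real n) / 3"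
    unfolding x0_def by (simp add: power2_eq_square field_simps)
  have h1: "x - x0 < 0" using H unfolding x_def x0_def y_def by simp
  have h2: "3*x + 3*x0 - (real n + 3*real i + 1)*y < 0"
  proof -
    have "3*x < (real i + 1) * y" using H unfolding x_def y_def by simp
    moreover have "(1 - real n - real i) * y \<le> 0" using assms unfolding y_def
      by (intro mult_nonpos_nonneg) auto
    ultimately show ?thesis unfolding x0_def by (simp add: field_simps)
  qed
  have "(x - x0) * (3*x + 3*x0 - (real n + 3*real i + 1)*y) > 0" using h1 h2 by (simp add: mult_neg_neg)
  moreover have "y^2 * (real i + 1) * (real i - real n) / 3 \<ge> 0" using assms by simp
  ultimately show False using q idq by linarith
qed


lemma Dd_rec: "Dd v = Dd (Suc v) + a (Suc v) * (A * (real v + 1) - Sa)"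
proof (cases "Suc v \<le> K")
  case True
  have "(\<Sum>r=Suc v..K. real r * a r) = (real v + 1) * a (Suc v) + (\<Sum>r=Suc (Suc v)..K. real r * a r)"
    using True by (simp add: sum.atLeast_Suc_atMost)
  moreover have "At (Suc v) = a (Suc v) + At (Suc (Suc v))" unfolding At_def using True by (simp add: sum.atLeast_Suc_atMost)
  ultimately show ?thesis unfolding Dd_def by (simp add: algebra_simps)
next
  case False
  then show ?thesis using aK[of "Suc v"] unfolding Dd_def At_def by simp
qed

lemma Ee_rec: "Ee v = Ee (Suc v) + b (Suc v) * (B * (real v + 1) - Sb)"
proof (cases "Suc v \<le> K")
  case True
  have "(\<Sum>r=Suc v..K. real r * b r) = (real v + 1) * b (Suc v) + (\<Sum>r=Suc (Suc v)..K. real r * b r)"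
    using True by (simp add: sum.atLeast_Suc_atMost)
  moreover have "Bt (Suc v) = b (Suc v) + Bt (Suc (Suc v))" unfolding Bt_def using True by (simp add: sum.atLeast_Suc_atMost)
  ultimately show ?thesis unfolding Ee_def by (simp add: algebra_simps)
next
  case False
  then show ?thesis using bK[of "Suc v"] unfolding Ee_def Bt_def by simp
qed

lemma Dd_zero: assumes "\<And>r. t < r \<Longrightarrow> a r = 0" shows "Dd t = 0"
  unfolding Dd_def At_def using assms by simp

lemma Ee_zero: assumes "\<And>r. t < r \<Longrightarrow> b r = 0" shows "Ee t = 0"
  unfolding Ee_def Bt_def using assms by simp

lemma Dd_0: "Dd 0 = Sa * a 0"
proof -
  have "Sa = (\<Sum>r=1..K. real r * a r)" unfolding Sa_def using K by (simp add: sum.atLeast_Suc_atMost)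
  moreover have "A = a 0 + At 1" unfolding A_def At_def using K by (simp add: sum.atLeast_Suc_atMost)
  ultimately show ?thesis unfolding Dd_def by (simp add: algebra_simps)
qed

lemma V1:
  assumes "i < n" "A > 0" "2*s \<le> i"
  shows "3 * Dd s \<le> a s * (A * (real n - real i - 2*real s) + 3 * Sa)"
proof -
  define top where "top = i div 2"
  define \<Phi> where "\<Phi> v = a v * (A * (real n - real i - 2*real v) + 3 * Sa) - 3 * Dd v" for v
  define k where "k v = (real v + 1) * (A * (real n - real i - 2*real v) + 3*Sa) - A * (real i - 2*real v) * (real i - 2*real v - 1)" for v
  have mean: "3 * Sa \<ge> A * (2*real i - real n)" using mean_a assms by simp
  have ti: "2*top \<le> i" "i \<le> 2*top + 1" unfolding top_def by auto
  have "\<Phi> s \<ge> 0"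
  proof (rule discrete_min[where l=0 and r=top and c="\<lambda>v. a v / (real v + 1)" and k=k])
    show "s \<le> top" using assms unfolding top_def by simp
    show "0 \<le> \<Phi> 0"
    proof -
      have "a 0 * (A * (real n - real i)) \<ge> 0" using assms a_nn[of 0] by simp
      then show ?thesis unfolding \<Phi>_def Dd_0 by (simp add: algebra_simps)
    qed
    show "0 \<le> \<Phi> top"
    proof -
      have "Dd top = 0" by (rule Dd_zero) (use a_sup1 ti in simp)
      moreover have "A * (real n - real i - 2*real top) + 3 * Sa \<ge> 0"
      proof -
        have "A * (real n - real i - 2*real top) \<ge> A * (real n - 2*real i)"
          using ti assms by (intro mult_left_mono) auto
        then show ?thesis using mean by (simp add: algebra_simps)
      qed
      ultimately show ?thesis unfolding \<Phi>_def using a_nn[of top] by simp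
    qed
    show "0 \<le> a v / (real v + 1)" for v using a_nn[of v] by simp
    show "\<Phi> v - \<Phi> (Suc v) = a v / (real v + 1) * k v" if "0 \<le> v" "v < top" for v
    proof -
      have d: "\<Phi> v - \<Phi> (Suc v) = a v * (A * (real n - real i - 2*real v) + 3*Sa) - a (Suc v) * A * (real n - real i + real v + 1)"
        unfolding \<Phi>_def using Dd_rec[of v] by (simp add: algebra_simps)
      have "(real v + 1) * (\<Phi> v - \<Phi> (Suc v)) = a v * (real v + 1) * (A * (real n - real i - 2*real v) + 3*Sa) - A * ((real v + 1) * (real n - real i + real v + 1) * a (Suc v))"
        unfolding d by (simp add: algebra_simps)
      also have "\<dots> = a v * k v" unfolding ratio_a k_def by (simp add: algebra_simps)
      finally have "(real v + 1) * (\<Phi> v - \<Phi> (Suc v)) = a v * k v" .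
      then show ?thesis by (simp add: field_simps)
    qed
    show "0 \<le> k v" if "0 \<le> p" "p \<le> v" "v \<le> q" "q < top" "0 \<le> k p" "0 \<le> k q" for p v q
    proof -
      define \<alpha> where "\<alpha> = -6*A"
      define \<beta> where "\<beta> = A * (real n + 3*real i - 4) + 3*Sa"
      define \<gamma> where "\<gamma> = A * (real n - real i) + 3*Sa - A * real i * (real i - 1)"
      have kk: "k w = \<alpha> * (real w)^2 + \<beta> * real w + \<gamma>" for w
        unfolding k_def \<alpha>_def \<beta>_def \<gamma>_def by (simp add: power2_eq_square algebra_simps)
      show ?thesis unfolding kk
        by (rule concave_quad[of \<alpha> "real p" _ "real q"]) (use that assms kk in \<open>auto simp: \<alpha>_def\<close>)
    qed
    show "0 \<le> k (top - 1)" if "0 + 2 \<le> top"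
    proof -
      have t1: "real (top - 1) = real top - 1" using that by simp
      have "A * (real n - 2*real i) + 3*Sa \<ge> 0" using mean by (simp add: algebra_simps)
      show ?thesis
      proof (cases "i = 2*top")
        case True
        have "k (top - 1) = real top * (A * (real n - 2*real i + 2) + 3*Sa) - 2*A"
          unfolding k_def t1 True by (simp add: algebra_simps)
        also have "\<dots> = real top * (A * (real n - 2*real i) + 3*Sa) + 2*A*(real top - 1)"
          by (simp add: algebra_simps)
        also have "\<dots> \<ge> 0" using \<open>A * (real n - 2*real i) + 3*Sa \<ge> 0\<close> assms that by simp
        finally show ?thesis .
      next
        case False
        then have ii: "i = 2*top + 1" using ti by simp
        have "k (top - 1) = real top * (A * (real n - 2*real i + 3) + 3*Sa) - 6*A"
          unfolding k_def t1 ii by (simp add: algebra_simps)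
        also have "\<dots> = real top * (A * (real n - 2*real i) + 3*Sa) + 3*A*(real top - 2)"
          by (simp add: algebra_simps)
        also have "\<dots> \<ge> 0" using \<open>A * (real n - 2*real i) + 3*Sa \<ge> 0\<close> assms that by simp
        finally show ?thesis .
      qed
    qed
  qed simp
  then show ?thesis unfolding \<Phi>_def by simp
qed


lemma W2:
  assumes "n \<le> i" "1 \<le> n" "B > 0" "i - n \<le> s" "2*s < i"
  shows "3 * Ee s \<le> B * (real s + 1) * b (Suc s)"
proof -
  define s1 where "s1 = (i - 1) div 2"
  define l where "l = i - n"
  define \<psi> where "\<psi> v = B * (real v + 1) * b (Suc v) - 3 * Ee v" for v
  define k where "k v = (real n - real i + real v + 1) * (3*Sb - 2*B*(real v + 1)) - B * (real i - 1 - 2*real v) * (real i - 2 - 2*real v)" for v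
  have mean: "3 * Sb \<ge> (real i + 1) * B" using mean_b assms by simp
  have ti: "2*s1 < i" "i \<le> 2*s1 + 2" using assms unfolding s1_def by auto
  have "\<psi> s \<ge> 0"
  proof (rule discrete_min[where l=l and r=s1 and c="\<lambda>v. b (Suc v) / (real n - real i + real v + 1)" and k=k])
    show "l \<le> s" using assms unfolding l_def by simp
    show "s \<le> s1" using assms unfolding s1_def by simp
    show "0 \<le> \<psi> l"
    proof -
      have lK: "l \<le> K" using K assms unfolding l_def by simp
      have z: "b r = 0" if "r \<le> l" for r using b_sup2[of r] that assms unfolding l_def by simp
      have "Sb = (\<Sum>r=0..l. real r * b r) + (\<Sum>r=Suc l..K. real r * b r)"
        unfolding Sb_def using sum_split_ivl[of 0 l K] lK by simp
      also have "(\<Sum>r=0..l. real r * b r) = 0" using z by simp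
      finally have 1: "Sb = (\<Sum>r=Suc l..K. real r * b r)" by simp
      have "B = (\<Sum>r=0..l. b r) + Bt (Suc l)"
        unfolding B_def Bt_def using sum_split_ivl[of 0 l K] lK by simp
      also have "(\<Sum>r=0..l. b r) = 0" using z by simp
      finally have 2: "B = Bt (Suc l)" by simp
      have "Ee l = 0" unfolding Ee_def using 1 2 by simp
      then show ?thesis unfolding \<psi>_def using b_nn[of "Suc l"] B_nn by simp
    qed
    show "0 \<le> \<psi> s1"
    proof -
      have "Ee (Suc s1) = 0" by (rule Ee_zero) (use b_sup1 ti in simp)
      then have "\<psi> s1 = b (Suc s1) * (3*Sb - 2*B*(real s1 + 1))"
        unfolding \<psi>_def using Ee_rec[of s1] by (simp add: algebra_simps)
      moreover have "3*Sb - 2*B*(real s1 + 1) \<ge> 0"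
      proof -
        have "2*(real s1 + 1) \<le> real i + 1" using ti by simp
        then have "2*B*(real s1 + 1) \<le> (real i + 1) * B" using assms
          by (simp add: mult.commute mult_right_mono)
        then show ?thesis using mean by simp
      qed
      ultimately show ?thesis using b_nn by simp
    qed
    show "0 \<le> b (Suc v) / (real n - real i + real v + 1)" if "l \<le> v" "v < s1" for v
      using b_nn[of "Suc v"] that assms unfolding l_def by simp
    show "\<psi> v - \<psi> (Suc v) = b (Suc v) / (real n - real i + real v + 1) * k v" if "l \<le> v" "v < s1" for v
    proof -
      have pos: "real n - real i + real v + 1 > 0" using that assms unfolding l_def by simp
      have d: "\<psi> v - \<psi> (Suc v) = b (Suc v) * (3*Sb - 2*B*(real v + 1)) - B * ((real v + 2) * b (Suc (Suc v)))"
        unfolding \<psi>_def using Ee_rec[of v] by (simp add: algebra_simps)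
      have rb: "(real n - real i + real v + 1) * (real v + 2) * b (Suc (Suc v)) = (real i - 1 - 2*real v) * (real i - 2 - 2*real v) * b (Suc v)"
        using ratio_b[of "Suc v"] by (simp add: algebra_simps)
      have "(real n - real i + real v + 1) * (\<psi> v - \<psi> (Suc v)) = (real n - real i + real v + 1) * b (Suc v) * (3*Sb - 2*B*(real v + 1)) - B * ((real n - real i + real v + 1) * (real v + 2) * b (Suc (Suc v)))"
        unfolding d by (simp add: algebra_simps)
      also have "\<dots> = b (Suc v) * k v" unfolding rb k_def by (simp add: algebra_simps)
      finally have "(real n - real i + real v + 1) * (\<psi> v - \<psi> (Suc v)) = b (Suc v) * k v" .
      then show ?thesis using pos by (simp add: field_simps)
    qed
    show "0 \<le> k v" if "l \<le> p" "p \<le> v" "v \<le> q" "q < s1" "0 \<le> k p" "0 \<le> k q" for p v q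
    proof -
      define \<alpha> where "\<alpha> = -6*B"
      define \<beta> where "\<beta> = 3*Sb - 2*B*(real n - real i + 1) - 2*B + B*(4*real i - 6)"
      define \<gamma> where "\<gamma> = (real n - real i + 1) * (3*Sb - 2*B) - B * (real i - 1) * (real i - 2)"
      have kk: "k w = \<alpha> * (real w)^2 + \<beta> * real w + \<gamma>" for w
        unfolding k_def \<alpha>_def \<beta>_def \<gamma>_def by (simp add: power2_eq_square algebra_simps)
      show ?thesis unfolding kk
        by (rule concave_quad[of \<alpha> "real p" _ "real q"]) (use that assms kk in \<open>auto simp: \<alpha>_def\<close>)
    qed
    show "0 \<le> k (s1 - 1)" if "l + 2 \<le> s1"
    proof -
      have t1: "real (s1 - 1) = real s1 - 1" using that by simp
      have ln: "real i - real n + 2 \<le> real s1" using that assms unfolding l_def by simp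
      show ?thesis
      proof (cases "i = 2*s1 + 1")
        case True
        have m: "3*Sb - 2*B*real s1 \<ge> 2*B" using mean True by (simp add: algebra_simps)
        have n1: "real n - real s1 - 2 \<ge> 0" using ln True by simp
        have "k (s1 - 1) = (real n - real s1 - 1) * (3*Sb - 2*B*real s1) - 2*B"
          unfolding k_def t1 True by (simp add: algebra_simps)
        also have "\<dots> = (real n - real s1 - 1) * (3*Sb - 2*B*real s1 - 2*B) + 2*B*(real n - real s1 - 2)"
          by (simp add: algebra_simps)
        also have "\<dots> \<ge> 0" using m n1 assms by simp
        finally show ?thesis .
      next
        case False
        then have ii: "i = 2*s1 + 2" using ti by simp
        have m: "3*Sb - 2*B*real s1 \<ge> 3*B" using mean ii by (simp add: algebra_simps)
        have n1: "real n - real s1 - 4 \<ge> 0" using ln ii by simp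
        have "k (s1 - 1) = (real n - real s1 - 2) * (3*Sb - 2*B*real s1) - 6*B"
          unfolding k_def t1 ii by (simp add: algebra_simps)
        also have "\<dots> = (real n - real s1 - 2) * (3*Sb - 2*B*real s1 - 3*B) + 3*B*(real n - real s1 - 4)"
          by (simp add: algebra_simps)
        also have "\<dots> \<ge> 0" using m n1 assms by simp
        finally show ?thesis .
      qed
    qed
  qed
  then show ?thesis unfolding \<psi>_def by simp
qed


lemma bound_nn: assumes "A > 0" "B > 0" "i \<le> 2*n - 1" "1 \<le> n"
  shows "0 \<le> (if i \<le> n - 1 then 2 * A / (real (i + 1) * B) else 2 / (2 * real n - real i))"
  using assms by auto

lemma boundA:
  assumes "a s > 0" "A > 0" "B > 0" "5 \<le> n" "i \<le> 2*n - 1"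
  shows "A * (if 2*s = i then 0 else (A * Bt (Suc s) - B * At (Suc s)) / (a s * A * B * (real i - 2*real s)))
     \<le> (if i \<le> n - 1 then 2 * A / (real (i + 1) * B) else 2 / (2 * real n - real i))"
proof (cases "2*s = i")
  case True then show ?thesis using bound_nn assms by simp
next
  case False
  have "2*s \<le> i" using a_sup1[of s] assms by (cases "i < 2*s") auto
  then have si: "2*s < i" using False by simp
  define F where "F = A * Bt (Suc s) - B * At (Suc s)"
  define d where "d = real i - 2*real s"
  have dpos: "d > 0" unfolding d_def using si by simp
  have e: "A * (F / (a s * A * B * d)) = F / (a s * B * d)" using assms dpos by (simp add: field_simps)
  show ?thesis
  proof (cases "i \<le> n - 1")
    case True
    have "(real i + 1) * F \<le> 2 * A * a s * d" using Fid1[of s] Dd_nn[of s] unfolding F_def d_def by simp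
    have Q: "(real i + 1) * a s * B * d > 0" using assms dpos by simp
    have "F / (a s * B * d) = ((real i + 1) * F) / ((real i + 1) * a s * B * d)" using assms dpos by (simp only: mult.assoc mult_divide_mult_cancel_left[of "(real i + 1)"])
    also have "\<dots> \<le> (2 * A * a s * d) / ((real i + 1) * a s * B * d)"
      by (rule divide_right_mono[OF \<open>(real i + 1) * F \<le> 2 * A * a s * d\<close>]) (use Q in linarith)
    also have "\<dots> = (a s * d * (2 * A)) / (a s * d * ((real i + 1) * B))" by (simp add: ac_simps)
    also have "\<dots> = 2 * A / (real (i + 1) * B)" using assms dpos by (subst mult_divide_mult_cancel_left) auto
    finally show ?thesis using True False e unfolding F_def d_def by simp
  next
    case nT: False
    have ni: "n \<le> i" using nT by simp
    have r1: "a s * d = (real s + 1) * b (Suc s)" unfolding d_def by (rule R1)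
    have "i \<le> n + s" using a_sup2[of s] assms by (cases "n + s < i") auto
    then have w2: "3 * Ee s \<le> B * (real s + 1) * b (Suc s)" using W2[of s] assms ni si by simp
    have "(2*real n - real i) * F = 3 * Ee s + B * (real s + 1) * b (Suc s)" using Fid2[of s] unfolding F_def .
    also have "\<dots> \<le> 2 * B * ((real s + 1) * b (Suc s))"
    proof -
      have "B * (real s + 1) * b (Suc s) = B * ((real s + 1) * b (Suc s))" by simp
      then show ?thesis using w2 by linarith
    qed
    finally have "(2*real n - real i) * F \<le> 2 * B * (a s * d)" using r1 by simp
    have pn: "2*real n - real i > 0" using assms by simp
    have Q: "(2*real n - real i) * a s * B * d > 0" using assms dpos pn by simp
    have "F / (a s * B * d) = ((2*real n - real i) * F) / ((2*real n - real i) * a s * B * d)" using assms dpos by (simp only: mult.assoc mult_divide_mult_cancel_left[of "(2*real n - real i)"])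
    also have "\<dots> \<le> (2 * B * (a s * d)) / ((2*real n - real i) * a s * B * d)"
      by (rule divide_right_mono[OF \<open>(2*real n - real i) * F \<le> 2 * B * (a s * d)\<close>]) (use Q in linarith)
    also have "\<dots> = 2 / (2 * real n - real i)" using assms dpos pn by (simp add: field_simps)
    finally show ?thesis using nT False e unfolding F_def d_def by simp
  qed
qed

lemma boundB:
  assumes "a s > 0" "A > 0" "B > 0" "5 \<le> n" "i \<le> 2*n - 1"
  shows "A * (if n \<le> i \<and> s = i - n then 0 else
        (A * (\<Sum>r=0..s. b r) - B * (if s = 0 then 0 else (\<Sum>r=0..s-1. a r)))
          / (a s * A * B * (real n - real i + real s)))
     \<le> (if i \<le> n - 1 then 2 * A / (real (i + 1) * B) else 2 / (2 * real n - real i))"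
proof (cases "n \<le> i \<and> s = i - n")
  case True then show ?thesis using bound_nn assms by simp
next
  case False
  have "2*s \<le> i" using a_sup1[of s] assms by (cases "i < 2*s") auto
  have "i \<le> n + s" using a_sup2[of s] assms by (cases "n + s < i") auto
  then have dpos: "real n - real i + real s > 0" using False by auto
  define d where "d = real n - real i + real s"
  have sK: "s \<le> K" using \<open>2*s \<le> i\<close> K by simp
  define F where "F = A * Bt (Suc s) - B * At (Suc s)"
  have Ble: "(\<Sum>r=0..s. b r) = B - Bt (Suc s)" unfolding B_def Bt_def using sum_split_ivl[of 0 s K] sK by simp
  have Ale: "(if s = 0 then 0 else (\<Sum>r=0..s-1. a r)) = A - a s - At (Suc s)"
  proof (cases "s = 0")
    case True
    have "A = a 0 + At 1" unfolding A_def At_def using K by (simp add: sum.atLeast_Suc_atMost)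
    then show ?thesis using True by simp
  next
    case False
    have "A = (\<Sum>r=0..s-1. a r) + At s" unfolding A_def At_def using sum_split_ivl[of 0 "s-1" K] sK False by simp
    moreover have "At s = a s + At (Suc s)" unfolding At_def using sK by (simp add: sum.atLeast_Suc_atMost)
    ultimately show ?thesis using False by simp
  qed
  have N: "A * (\<Sum>r=0..s. b r) - B * (if s = 0 then 0 else (\<Sum>r=0..s-1. a r)) = B * a s - F"
    unfolding Ble Ale F_def by (simp add: algebra_simps)
  define N where "N = B * a s - F"
  have e: "A * (N / (a s * A * B * d)) = N / (a s * B * d)" using assms dpos d_def by (simp add: field_simps)
  show ?thesis
  proof (cases "i \<le> n - 1")
    case True
    have iin: "i < n" using True assms by simp
    have v1: "3 * Dd s \<le> a s * (A * (real n - real i - 2*real s) + 3 * Sa)" using V1 iin assms \<open>2*s \<le> i\<close> by simp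
    have f1: "(real i + 1) * F = 2 * A * a s * (real i - 2*real s) - 3 * Dd s" using Fid1[of s] unfolding F_def .
    have e1: "(real i + 1) * B = (real n + real i) * A - 3 * Sa" by (rule E1)
    have "(real i + 1) * N = a s * ((real i + 1) * B) - (real i + 1) * F" unfolding N_def by (simp add: algebra_simps)
    also have "\<dots> = a s * ((real n + real i) * A - 3 * Sa) - (2 * A * a s * (real i - 2*real s) - 3 * Dd s)" using f1 e1 by simp
    also have "\<dots> \<le> 2 * A * a s * d" using v1 unfolding d_def by (simp add: algebra_simps)
    finally have X: "(real i + 1) * N \<le> 2 * A * a s * d" .
    have Q: "(real i + 1) * a s * B * d > 0" using assms dpos d_def by simp
    have "N / (a s * B * d) = ((real i + 1) * N) / ((real i + 1) * a s * B * d)" using assms dpos by (simp only: mult.assoc mult_divide_mult_cancel_left[of "(real i + 1)"])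
    also have "\<dots> \<le> (2 * A * a s * d) / ((real i + 1) * a s * B * d)"
      by (rule divide_right_mono[OF X]) (use Q in linarith)
    also have "\<dots> = (a s * d * (2 * A)) / (a s * d * ((real i + 1) * B))" by (simp add: ac_simps)
    also have "\<dots> = 2 * A / (real (i + 1) * B)" using assms dpos d_def by (subst mult_divide_mult_cancel_left) auto
    finally show ?thesis using True False e N iin unfolding N_def d_def by simp
  next
    case nT: False
    have tb: "(2*real n - real i) * a s = 2 * (real i + 1 - 2*real s) * b s + (real s + 1) * b (Suc s)" by (rule termB)
    have f2: "(2*real n - real i) * F = 3 * Ee s + B * (real s + 1) * b (Suc s)" using Fid2[of s] unfolding F_def .
    have r2: "a s * d = (real i + 1 - 2*real s) * b s" unfolding d_def by (rule R2)
    have "(2*real n - real i) * N = B * ((2*real n - real i) * a s) - (2*real n - real i) * F" unfolding N_def by (simp add: algebra_simps)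
    also have "\<dots> = B * (2 * (real i + 1 - 2*real s) * b s + (real s + 1) * b (Suc s)) - (3 * Ee s + B * (real s + 1) * b (Suc s))"
      by (simp only: tb f2)
    also have "\<dots> = 2 * B * ((real i + 1 - 2*real s) * b s) - 3 * Ee s" by (simp add: algebra_simps)
    also have "\<dots> \<le> 2 * B * (a s * d)" using Ee_nn[of s] r2 by simp
    finally have X: "(2*real n - real i) * N \<le> 2 * B * (a s * d)" .
    have pn: "2*real n - real i > 0" using assms by simp
    have Q: "(2*real n - real i) * a s * B * d > 0" using assms dpos pn d_def by simp
    have "N / (a s * B * d) = ((2*real n - real i) * N) / ((2*real n - real i) * a s * B * d)" using assms dpos by (simp only: mult.assoc mult_divide_mult_cancel_left[of "(2*real n - real i)"])
    also have "\<dots> \<le> (2 * B * (a s * d)) / ((2*real n - real i) * a s * B * d)"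
      by (rule divide_right_mono[OF X]) (use Q in linarith)
    also have "\<dots> = 2 / (2 * real n - real i)" using assms dpos pn d_def by (simp add: field_simps)
    finally show ?thesis using nT False e N unfolding N_def d_def by simp
  qed
qed


lemma Nprime:
  assumes "2*s \<le> i"
  shows "A * (\<Sum>r=0..s. b r) - B * (if s = 0 then 0 else (\<Sum>r=0..s-1. a r)) = B * a s - (A * Bt (Suc s) - B * At (Suc s))"
proof -
  have sK: "s \<le> K" using assms K by simp
  have Ble: "(\<Sum>r=0..s. b r) = B - Bt (Suc s)" unfolding B_def Bt_def using sum_split_ivl[of 0 s K] sK by simp
  have Ale: "(if s = 0 then 0 else (\<Sum>r=0..s-1. a r)) = A - a s - At (Suc s)"
  proof (cases "s = 0")
    case True
    have "A = a 0 + At 1" unfolding A_def At_def using K by (simp add: sum.atLeast_Suc_atMost)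
    then show ?thesis using True by simp
  next
    case False
    have "A = (\<Sum>r=0..s-1. a r) + At s" unfolding A_def At_def using sum_split_ivl[of 0 "s-1" K] sK False by simp
    moreover have "At s = a s + At (Suc s)" unfolding At_def using sK by (simp add: sum.atLeast_Suc_atMost)
    ultimately show ?thesis using False by simp
  qed
  show ?thesis unfolding Ble Ale by (simp add: algebra_simps)
qed

lemma sum_one:
  assumes "a s > 0" "A > 0" "B > 0"
  shows "A * ((if 2*s = i then 0 else (A * Bt (Suc s) - B * At (Suc s)) / (a s * A * B * (real i - 2*real s))) * (real i - 2*real s)
        + (if n \<le> i \<and> s = i - n then 0 else
        (A * (\<Sum>r=0..s. b r) - B * (if s = 0 then 0 else (\<Sum>r=0..s-1. a r)))
          / (a s * A * B * (real n - real i + real s))) * (real n - real i + real s)) = 1"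
proof -
  have si: "2*s \<le> i" using a_sup1[of s] assms by (cases "i < 2*s") auto
  have "i \<le> n + s" using a_sup2[of s] assms by (cases "n + s < i") auto
  define N where "N = A * Bt (Suc s) - B * At (Suc s)"
  define N' where "N' = A * (\<Sum>r=0..s. b r) - B * (if s = 0 then 0 else (\<Sum>r=0..s-1. a r))"
  have NN: "N' = B * a s - N" unfolding N_def N'_def using Nprime si by simp
  have t1: "A * ((if 2*s = i then 0 else N / (a s * A * B * (real i - 2*real s))) * (real i - 2*real s)) = N / (a s * B)"
  proof (cases "2*s = i")
    case True
    have "Bt (Suc s) = 0" unfolding Bt_def using b_sup1 True by simp
    moreover have "At (Suc s) = 0" unfolding At_def using a_sup1 True by simp
    ultimately show ?thesis using True unfolding N_def by simp
  next
    case False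
    then have "real i - 2*real s \<noteq> 0" by simp
    then show ?thesis using False assms cancel_helper by simp
  qed
  have t2: "A * ((if n \<le> i \<and> s = i - n then 0 else N' / (a s * A * B * (real n - real i + real s))) * (real n - real i + real s)) = N' / (a s * B)"
  proof (cases "n \<le> i \<and> s = i - n")
    case True
    have "(\<Sum>r=0..s. b r) = 0" by (rule sum.neutral) (use b_sup2 True in auto)
    moreover have "(if s = 0 then 0 else (\<Sum>r=0..s-1. a r)) = 0" using a_sup2 True by auto
    ultimately show ?thesis using True unfolding N'_def by simp
  next
    case False
    then have "real n - real i + real s \<noteq> 0" using \<open>i \<le> n + s\<close> by auto
    then show ?thesis using False assms cancel_helper by auto
  qed
  have "A * ((if 2*s = i then 0 else N / (a s * A * B * (real i - 2*real s))) * (real i - 2*real s)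
        + (if n \<le> i \<and> s = i - n then 0 else N' / (a s * A * B * (real n - real i + real s))) * (real n - real i + real s))
      = N / (a s * B) + N' / (a s * B)" using t1 t2 by (simp add: distrib_left)
  also have "\<dots> = 1" using NN assms by (simp add: field_simps)
  finally show ?thesis unfolding N_def N'_def .
qed

end



lemma cube_Suc_iff: "y \<in> cube (Suc n) \<longleftrightarrow> y(n:=0) \<in> cube n \<and> y n \<le> 2"
  unfolding cube_def by (auto simp: less_Suc_eq)

lemma cube_zero: "x \<in> cube n \<Longrightarrow> x n = 0"
  unfolding cube_def by simp

lemma sum_upd: "(\<Sum>k<n. (y(n:=v)) k) = (\<Sum>k<n. y k)" for y :: "nat \<Rightarrow> nat" and n :: nat
  by (rule sum.cong) auto

lemma twos_upd: "twos n (y(n:=v)) = twos n y"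
proof -
  have "{k. k < n \<and> (y(n:=v)) k = 2} = {k. k < n \<and> y k = 2}" by auto
  then show ?thesis unfolding twos_def by simp
qed

lemma twos_Suc: "twos (Suc n) y = twos n y + (if y n = 2 then 1 else 0)"
proof -
  have "{k. k < Suc n \<and> y k = 2} = {k. k < n \<and> y k = 2} \<union> (if y n = 2 then {n} else {})"
    by (auto simp: less_Suc_eq)
  moreover have "finite {k. k < n \<and> y k = 2}" by simp
  ultimately show ?thesis unfolding twos_def by (auto simp: card_insert_if)
qed

lemma twos_le: "twos n y \<le> n"
proof -
  have "{k. k < n \<and> y k = 2} \<subseteq> {..<n}" by auto
  then show ?thesis unfolding twos_def using card_mono[of "{..<n}"] by fastforce
qed

lemma finite_cube: "finite (cube n)"
proof (induction n)
  case 0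
  have "cube 0 = {\<lambda>_. 0}" unfolding cube_def by auto
  then show ?case by simp
next
  case (Suc n)
  have "cube (Suc n) \<subseteq> (\<lambda>(x, v). x(n:=v)) ` (cube n \<times> {..2})"
  proof
    fix y assume "y \<in> cube (Suc n)"
    then have "y(n:=0) \<in> cube n" "y n \<le> 2" using cube_Suc_iff by auto
    moreover have "y = (y(n:=0))(n := y n)" by simp
    ultimately have "(y(n:=0), y n) \<in> cube n \<times> {..2}" by simp
    then show "y \<in> (\<lambda>(x, v). x(n:=v)) ` (cube n \<times> {..2})"
      by (rule image_eqI[rotated]) simp
  qed
  moreover have "finite ((\<lambda>(x, v). x(n:=v)) ` (cube n \<times> {..2}))" using Suc by simp
  ultimately show ?case by (rule finite_subset)
qed

lemma finite_lev: "finite (lev n i)" unfolding lev_def using finite_cube by simp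
lemma finite_levs: "finite (levs n i s)" unfolding levs_def using finite_lev by simp

definition fib :: "nat \<Rightarrow> nat \<Rightarrow> nat \<Rightarrow> nat \<Rightarrow> (nat \<Rightarrow> nat) set" where
  "fib n i s v = {y \<in> levs (Suc n) i s. y n = v}"

lemma fib_card:
  assumes "v \<le> 2"
  shows "card (fib n i s v) = (if v \<le> i \<and> (if v = 2 then 1 else 0) \<le> s
           then card (levs n (i - v) (s - (if v = 2 then 1 else 0))) else 0)"
proof -
  define w where "w = (if v = 2 then 1 else (0::nat))"
  have mem: "y \<in> fib n i s v \<longleftrightarrow> y(n:=0) \<in> cube n \<and> y n = v \<and> (\<Sum>k<n. (y(n:=0)) k) + v = i \<and> twos n (y(n:=0)) + w = s" for y
    unfolding fib_def levs_def lev_def w_def using assms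
    by (auto simp: cube_Suc_iff sum_upd twos_upd twos_Suc)
  show ?thesis
  proof (cases "v \<le> i \<and> w \<le> s")
    case True
    have "bij_betw (\<lambda>y. y(n:=0)) (fib n i s v) (levs n (i - v) (s - w))"
    proof (rule bij_betw_byWitness[where f'="\<lambda>x. x(n:=v)"])
      show "\<forall>a\<in>fib n i s v. a(n := 0, n := v) = a" using mem by auto
      show "\<forall>a'\<in>levs n (i - v) (s - w). a'(n := v, n := 0) = a'"
        unfolding levs_def lev_def using cube_zero by fastforce
      show "(\<lambda>y. y(n := 0)) ` fib n i s v \<subseteq> levs n (i - v) (s - w)"
        using mem unfolding levs_def lev_def by auto
      show "(\<lambda>x. x(n := v)) ` levs n (i - v) (s - w) \<subseteq> fib n i s v"
      proof
        fix y assume "y \<in> (\<lambda>x. x(n := v)) ` levs n (i - v) (s - w)"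
        then obtain x where x: "x \<in> levs n (i - v) (s - w)" "y = x(n:=v)" by auto
        have "x n = 0" using x cube_zero unfolding levs_def lev_def by auto
        then have "y(n:=0) = x" using x by auto
        then show "y \<in> fib n i s v" using mem[of y] x True unfolding levs_def lev_def by auto
      qed
    qed
    then show ?thesis using True bij_betw_same_card w_def by fastforce
  next
    case False
    then have "fib n i s v = {}" using mem by fastforce
    then show ?thesis using False by (auto simp: w_def split: if_splits)
  qed
qed

lemma levs_Suc_card:
  "card (levs (Suc n) i s) = card (fib n i s 0) + card (fib n i s 1) + card (fib n i s 2)"
proof -
  have e: "levs (Suc n) i s = (fib n i s 0 \<union> fib n i s 1) \<union> fib n i s 2"
    unfolding fib_def levs_def lev_def using cube_Suc_iff by fastforce
  have f: "finite (fib n i s v)" for v unfolding fib_def using finite_levs by simp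
  have "card ((fib n i s 0 \<union> fib n i s 1) \<union> fib n i s 2) = card (fib n i s 0 \<union> fib n i s 1) + card (fib n i s 2)"
    by (rule card_Un_disjoint) (use f in \<open>auto simp: fib_def\<close>)
  also have "card (fib n i s 0 \<union> fib n i s 1) = card (fib n i s 0) + card (fib n i s 1)"
    by (rule card_Un_disjoint) (use f in \<open>auto simp: fib_def\<close>)
  finally show ?thesis using e by simp
qed

definition C :: "nat \<Rightarrow> int \<Rightarrow> int \<Rightarrow> real" where
  "C n i s = (if i < 0 \<or> s < 0 then 0 else real (card (levs n (nat i) (nat s))))"

lemma C_rec: "C (Suc n) i s = C n i s + C n (i - 1) s + C n (i - 2) (s - 1)"
proof (cases "i < 0 \<or> s < 0")
  case True then show ?thesis unfolding C_def by auto
next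
  case False
  then have i: "i \<ge> 0" "s \<ge> 0" by auto
  have f0: "card (fib n (nat i) (nat s) 0) = card (levs n (nat i) (nat s))" using fib_card[of 0] by simp
  have f1: "real (card (fib n (nat i) (nat s) 1)) = C n (i - 1) s"
    using fib_card[of 1 n "nat i" "nat s"] i unfolding C_def by (auto simp: nat_diff_distrib)
  have f2: "real (card (fib n (nat i) (nat s) 2)) = C n (i - 2) (s - 1)"
    using fib_card[of 2 n "nat i" "nat s"] i unfolding C_def by (auto simp: nat_diff_distrib)
  show ?thesis using levs_Suc_card[of n "nat i" "nat s"] f0 f1 f2 i unfolding C_def by simp
qed

lemma C_0: "C 0 i s = (if i = 0 \<and> s = 0 then 1 else 0)"
proof -
  have "cube 0 = {\<lambda>_. 0}" unfolding cube_def by auto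
  then have "levs 0 i' s' = (if i' = 0 \<and> s' = 0 then {\<lambda>_. 0} else {})" for i' s'
    unfolding levs_def lev_def twos_def by auto
  then show ?thesis unfolding C_def by auto
qed

lemma C_nn: "C n i s \<ge> 0" unfolding C_def by simp

lemma C_sup1: "i < 2*s \<Longrightarrow> C n i s = 0"
proof (induction n arbitrary: i s)
  case 0 then show ?case by (simp add: C_0)
next
  case (Suc n) then show ?case by (simp add: C_rec)
qed

lemma C_sup2: "int n + s < i \<Longrightarrow> C n i s = 0"
proof (induction n arbitrary: i s)
  case 0 then show ?case by (auto simp: C_0)
next
  case (Suc n) then show ?case by (simp add: C_rec)
qed

lemma C_neg: "i < 0 \<or> s < 0 \<Longrightarrow> C n i s = 0" unfolding C_def by auto

lemma C_R1: "C n i s * (of_int i - 2 * of_int s) = (of_int s + 1) * C n (i+1) (s+1)"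
proof (induction n arbitrary: i s)
  case 0 then show ?case by (auto simp: C_0)
next
  case (Suc n)
  have h1: "C n i s * (of_int i - 2 * of_int s) = (of_int s + 1) * C n (i+1) (s+1)" by (rule Suc)
  have h2: "C n (i-1) s * (of_int (i-1) - 2 * of_int s) = (of_int s + 1) * C n (i-1+1) (s+1)" by (rule Suc)
  have h3: "C n (i-2) (s-1) * (of_int (i-2) - 2 * of_int (s-1)) = (of_int (s-1) + 1) * C n (i-2+1) (s-1+1)" by (rule Suc)
  show ?case using h1 h2 h3 by (simp add: C_rec algebra_simps)
qed

lemma C_R2: "C n i s * (real n - of_int i + of_int s) = (of_int i + 1 - 2 * of_int s) * C n (i+1) s"
proof (induction n arbitrary: i s)
  case 0 then show ?case by (auto simp: C_0)
next
  case (Suc n)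
  have h1: "C n i s * (real n - of_int i + of_int s) = (of_int i + 1 - 2 * of_int s) * C n (i+1) s" by (rule Suc)
  have h2: "C n (i-1) s * (real n - of_int (i-1) + of_int s) = (of_int (i-1) + 1 - 2 * of_int s) * C n (i-1+1) s" by (rule Suc)
  have h3: "C n (i-2) (s-1) * (real n - of_int (i-2) + of_int (s-1)) = (of_int (i-2) + 1 - 2 * of_int (s-1)) * C n (i-2+1) (s-1)" by (rule Suc)
  show ?case using h1 h2 h3 by (simp add: C_rec algebra_simps)
qed




lemma C_nat: "C n (int j) (int r) = real (card (levs n j r))" unfolding C_def by simp

lemma interp:
  assumes "j \<le> 2*n"
  shows "seqs n j (n+1) (\<lambda>r. real (card (levs n j r))) (\<lambda>r. real (card (levs n (j+1) r)))"
proof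
  have e1: "int j + 1 = int (j+1)" by simp
  have e2: "int s + 1 = int (Suc s)" for s by simp
  show "j + 2 \<le> 2 * (n + 1)" using assms by simp
  show "0 \<le> real (card (levs n j r))" for r by simp
  show "0 \<le> real (card (levs n (j+1) r))" for r by simp
  show "real (card (levs n j r)) = 0" if "j < 2*r" for r using C_sup1[of "int j" "int r" n] that by (simp add: C_nat)
  show "real (card (levs n j r)) = 0" if "n + r < j" for r using C_sup2[of n "int r" "int j"] that by (simp add: C_nat)
  show "real (card (levs n (j+1) r)) = 0" if "j + 1 < 2*r" for r
    using C_sup1[of "int (j+1)" "int r" n] that by (simp only: C_nat; simp)
  show "real (card (levs n (j+1) r)) = 0" if "n + r < j + 1" for r
    using C_sup2[of n "int r" "int (j+1)"] that by (simp only: C_nat; simp)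
  show "real (card (levs n j s)) * (real j - 2 * real s) = (real s + 1) * real (card (levs n (j+1) (Suc s)))" for s
    using C_R1[of n "int j" "int s", unfolded e1 e2] by (simp only: C_nat; simp)
  show "real (card (levs n j s)) * (real n - real j + real s) = (real j + 1 - 2 * real s) * real (card (levs n (j+1) s))" for s
    using C_R2[of n "int j" "int s", unfolded e1] by (simp only: C_nat; simp)
qed

lemma card_lev_split:
  assumes "finite R"
  shows "card {x \<in> lev n j. twos n x \<in> R} = (\<Sum>r\<in>R. card (levs n j r))"
proof -
  have "{x \<in> lev n j. twos n x \<in> R} = (\<Union>r\<in>R. levs n j r)" unfolding levs_def by auto
  moreover have "card (\<Union>r\<in>R. levs n j r) = (\<Sum>r\<in>R. card (levs n j r))"
    by (rule card_UN_disjoint) (use assms finite_levs in \<open>auto simp: levs_def\<close>)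
  ultimately show ?thesis by simp
qed

lemma card_lev: "real (card (lev n j)) = (\<Sum>r=0..n+1. real (card (levs n j r)))"
proof -
  have "lev n j = {x \<in> lev n j. twos n x \<in> {0..n+1}}" using twos_le by (auto simp: le_SucI)
  then show ?thesis using card_lev_split[of "{0..n+1}" n j] by simp
qed

lemma card_ge: "real (card (levs_ge n j s)) = (\<Sum>r=s..n+1. real (card (levs n j r)))"
proof -
  have "levs_ge n j s = {x \<in> lev n j. twos n x \<in> {s..n+1}}" unfolding levs_ge_def using twos_le by (auto simp: le_SucI)
  then show ?thesis using card_lev_split[of "{s..n+1}" n j] by simp
qed

lemma card_le: "real (card (levs_le n j s)) = (\<Sum>r=0..s. real (card (levs n j r)))"
proof -
  have "levs_le n j s = {x \<in> lev n j. twos n x \<in> {0..s}}" unfolding levs_le_def by auto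
  then show ?thesis using card_lev_split[of "{0..s}" n j] by simp
qed

abbreviation "aa n j \<equiv> (\<lambda>r. real (card (levs n j r)))"

lemma wt_eq:
  assumes "j \<le> 2*n"
  shows "wt n j s = (if 2*s = j then 0 else (seqs.A (n+1) (aa n j) * seqs.Bt (n+1) (aa n (j+1)) (Suc s)
      - seqs.B (n+1) (aa n (j+1)) * seqs.At (n+1) (aa n j) (Suc s))
      / (aa n j s * seqs.A (n+1) (aa n j) * seqs.B (n+1) (aa n (j+1)) * (real j - 2*real s)))"
  unfolding wt_def seqs.A_def[OF interp[OF assms]] seqs.B_def[OF interp[OF assms]] seqs.At_def[OF interp[OF assms]] seqs.Bt_def[OF interp[OF assms]]
  by (simp only: card_lev card_ge Suc_eq_plus1)

lemma wt'_eq: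
  assumes "j \<le> 2*n"
  shows "wt' n j s = (if n \<le> j \<and> s = j - n then 0 else
        (seqs.A (n+1) (aa n j) * (\<Sum>r=0..s. aa n (j+1) r) - seqs.B (n+1) (aa n (j+1)) * (if s = 0 then 0 else (\<Sum>r=0..s-1. aa n j r)))
          / (aa n j s * seqs.A (n+1) (aa n j) * seqs.B (n+1) (aa n (j+1)) * (real n - real j + real s)))"
  unfolding wt'_def seqs.A_def[OF interp[OF assms]] seqs.B_def[OF interp[OF assms]]
  by (simp only: card_lev card_le)


lemma card_pos: "x \<in> X \<Longrightarrow> finite X \<Longrightarrow> real (card X) > 0"
  by (auto simp: card_gt_0_iff)





lemma trans_bound:
  assumes "5 \<le> n" "i \<le> 2*n - 1" "x \<in> lev n i"
  shows "trans_prob n i x y \<le> (if i \<le> n - 1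
            then 2 * real (card (lev n i)) / (real (i + 1) * real (card (lev n (i + 1))))
            else 2 / (2 * real n - real i))"
proof -
  have ij: "i \<le> 2*n" using assms by simp
  interpret S: seqs n i "n+1" "aa n i" "aa n (i+1)" by (rule interp[OF ij])
  have Aeq: "S.A = real (card (lev n i))" unfolding S.A_def by (simp add: card_lev)
  have Beq: "S.B = real (card (lev n (i+1)))" unfolding S.B_def using card_lev[of n "i+1"] by simp
  have Apos: "S.A > 0" unfolding Aeq using card_pos[OF assms(3) finite_lev] by simp
  define s where "s = twos n x"
  have xs: "x \<in> levs n i s" using assms unfolding levs_def s_def by simp
  have as: "aa n i s > 0" using card_pos[OF xs finite_levs] by simp
  show ?thesis
  proof (cases "y \<in> lev n (i+1) \<and> x < y")
    case False
    then have "trans_prob n i x y = 0" unfolding trans_prob_def by auto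
    then show ?thesis using assms by auto
  next
    case True
    have Bpos: "S.B > 0" unfolding Beq using card_pos[of y "lev n (i+1)", OF _ finite_lev] True by simp
    have bA: "S.A * wt n i s \<le> (if i \<le> n - 1 then 2 * S.A / (real (i + 1) * S.B) else 2 / (2 * real n - real i))"
      unfolding wt_eq[OF ij] using S.boundA[OF as Apos Bpos assms(1,2)] by simp
    have bB: "S.A * wt' n i s \<le> (if i \<le> n - 1 then 2 * S.A / (real (i + 1) * S.B) else 2 / (2 * real n - real i))"
      unfolding wt'_eq[OF ij] using S.boundB[OF as Apos Bpos assms(1,2)] by simp
    have "trans_prob n i x y = S.A * (if twos n y = twos n x + 1 then wt n i s else wt' n i s)"
      unfolding trans_prob_def using True assms Aeq s_def by simp
    then have "trans_prob n i x y \<le> (if i \<le> n - 1 then 2 * S.A / (real (i + 1) * S.B) else 2 / (2 * real n - real i))"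
      using bA bB by (cases "twos n y = twos n x + 1") simp_all
    then show ?thesis by (simp only: Aeq Beq)
  qed
qed




lemma nat_sum_one:
  fixes d :: "'a \<Rightarrow> nat"
  assumes "finite A" "sum d A = 1"
  shows "\<exists>k\<in>A. d k = 1 \<and> (\<forall>k'\<in>A. k' \<noteq> k \<longrightarrow> d k' = 0)"
proof -
  obtain k where k: "k \<in> A" "d k \<noteq> 0"
    using assms by (metis one_neq_zero sum.neutral)
  have "sum d A = d k + sum d (A - {k})" using assms k by (simp add: sum.remove)
  then have s: "d k + sum d (A - {k}) = 1" using assms by simp
  then have dk: "d k = 1" using k by linarith
  then have "sum d (A - {k}) = 0" using s by simp
  then have "\<forall>k'\<in>A - {k}. d k' = 0" using assms by (simp add: sum_eq_0_iff)
  then have "\<forall>k'\<in>A. k' \<noteq> k \<longrightarrow> d k' = 0" by auto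
  then show ?thesis using k \<open>d k = 1\<close> by auto
qed

lemma upd_val: "(z(k := z k + 1)) k' = z k' + (if k' = k then 1 else 0)" for z :: "nat \<Rightarrow> nat"
  by simp

lemma cover_char:
  assumes "z \<in> lev n j"
  shows "(y \<in> lev n (j+1) \<and> z < y) \<longleftrightarrow> (\<exists>k<n. z k < 2 \<and> y = z(k := z k + 1))"
proof
  assume H: "y \<in> lev n (j+1) \<and> z < y"
  have zc: "z \<in> cube n" "(\<Sum>k<n. z k) = j" using assms unfolding lev_def by auto
  have yc: "y \<in> cube n" "(\<Sum>k<n. y k) = j + 1" using H unfolding lev_def by auto
  have le: "\<And>k. z k \<le> y k" using H by (simp add: less_fun_def le_fun_def)
  have "(\<Sum>k<n. y k - z k) = (\<Sum>k<n. y k) - (\<Sum>k<n. z k)" using le by (simp add: sum_subtractf_nat)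
  then have "(\<Sum>k<n. y k - z k) = 1" using zc yc by simp
  then obtain k where k: "k < n" "y k - z k = 1" "\<forall>k'<n. k' \<noteq> k \<longrightarrow> y k' - z k' = 0"
    using nat_sum_one[of "{..<n}" "\<lambda>k. y k - z k"] by auto
  have "y = z(k := z k + 1)"
  proof
    fix k'
    show "y k' = (z(k := z k + 1)) k'"
    proof (cases "k' < n")
      case True then show ?thesis using k le[of k'] by (cases "k' = k") auto
    next
      case False then show ?thesis using zc yc k unfolding cube_def by auto
    qed
  qed
  moreover have "z k < 2" using yc k le[of k] unfolding cube_def by force
  ultimately show "\<exists>k<n. z k < 2 \<and> y = z(k := z k + 1)" using k by auto
next
  assume "\<exists>k<n. z k < 2 \<and> y = z(k := z k + 1)"
  then obtain k where k: "k < n" "z k < 2" "y = z(k := z k + 1)" by auto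
  have zc: "z \<in> cube n" "(\<Sum>k<n. z k) = j" using assms unfolding lev_def by auto
  have "y \<in> cube n" using zc k unfolding cube_def by auto
  moreover have "(\<Sum>k'<n. y k') = j + 1"
  proof -
    have "(\<Sum>k'<n. y k') = (\<Sum>k'<n. z k' + (if k' = k then 1 else 0))" unfolding k(3) upd_val ..
    also have "\<dots> = (\<Sum>k'<n. z k') + 1" using k by (simp add: sum.distrib)
    finally show ?thesis using zc by simp
  qed
  moreover have "z < y"
  proof -
    have "z \<le> y" unfolding k(3) le_fun_def by simp
    moreover have "z \<noteq> y" using k(3) by (metis fun_upd_same n_not_Suc_n Suc_eq_plus1)
    ultimately show ?thesis by (simp add: less_le)
  qed
  ultimately show "y \<in> lev n (j+1) \<and> z < y" unfolding lev_def by simp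
qed

lemma twos_cover:
  assumes "k < n" "z k < 2"
  shows "twos n (z(k := z k + 1)) = twos n z + (if z k = 1 then 1 else 0)"
proof -
  have "{k'. k' < n \<and> (z(k := z k + 1)) k' = 2} = (if z k = 1 then insert k {k'. k' < n \<and> z k' = 2} else {k'. k' < n \<and> z k' = 2})"
    using assms by auto
  moreover have "k \<notin> {k'. k' < n \<and> z k' = 2}" using assms by auto
  ultimately show ?thesis unfolding twos_def by simp
qed

lemma counts:
  assumes "z \<in> lev n j"
  shows "real (card {k. k < n \<and> z k = 1}) = real j - 2 * real (twos n z)"
    and "real (card {k. k < n \<and> z k = 0}) = real n - real j + real (twos n z)"
proof -
  have zc: "z \<in> cube n" "(\<Sum>k<n. z k) = j" using assms unfolding lev_def by auto
  have b: "z k \<le> 2" if "k < n" for k using zc that unfolding cube_def by auto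
  have e: "real (z k) = of_bool (z k = 1) + 2 * of_bool (z k = 2)" if "k < n" for k
    using b[OF that] by (cases "z k"; cases "z k - 1"; auto)
  have "real j = (\<Sum>k<n. real (z k))" using zc(2) of_nat_sum[of z "{..<n}"] by simp
  also have "\<dots> = (\<Sum>k<n. of_bool (z k = 1)) + 2 * (\<Sum>k<n. of_bool (z k = 2))"
    using e by (simp add: sum.distrib sum_distrib_left)
  also have "\<dots> = real (card {k. k < n \<and> z k = 1}) + 2 * real (card {k. k < n \<and> z k = 2})"
    by (simp add: Int_def lessThan_def)
  finally have S: "real j = real (card {k. k < n \<and> z k = 1}) + 2 * real (twos n z)" unfolding twos_def .
  have e2: "(1::real) = of_bool (z k = 0) + of_bool (z k = 1) + of_bool (z k = 2)" if "k < n" for k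
    using b[OF that] by (cases "z k"; cases "z k - 1"; auto)
  have "real n = (\<Sum>k<n. (1::real))" by simp
  also have "\<dots> = (\<Sum>k<n. of_bool (z k = 0) + of_bool (z k = 1) + of_bool (z k = 2))"
    by (rule sum.cong) (use e2 in auto)
  also have "\<dots> = real (card {k. k < n \<and> z k = 0}) + real (card {k. k < n \<and> z k = 1}) + real (card {k. k < n \<and> z k = 2})"
    by (simp add: sum.distrib Int_def lessThan_def)
  finally have T: "real n = real (card {k. k < n \<and> z k = 0}) + real (card {k. k < n \<and> z k = 1}) + real (twos n z)"
    unfolding twos_def .
  show "real (card {k. k < n \<and> z k = 1}) = real j - 2 * real (twos n z)" using S by simp
  show "real (card {k. k < n \<and> z k = 0}) = real n - real j + real (twos n z)" using S T by simp
qed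


lemma sum_trans:
  assumes "j < 2*n" "z \<in> lev n j"
  shows "(\<Sum>y\<in>lev n (j+1). trans_prob n j z y) = 1"
proof -
  have ij: "j \<le> 2*n" using assms by simp
  interpret S: seqs n j "n+1" "aa n j" "aa n (j+1)" by (rule interp[OF ij])
  define s where "s = twos n z"
  have zs: "z \<in> levs n j s" using assms unfolding levs_def s_def by simp
  have as: "aa n j s > 0" using card_pos[OF zs finite_levs] by simp
  have Aeq: "S.A = real (card (lev n j))" unfolding S.A_def by (simp add: card_lev)
  have Apos: "S.A > 0" unfolding Aeq using card_pos[OF assms(2) finite_lev] by simp
  define f where "f k = z(k := z k + 1)" for k
  define KS where "KS = {k. k < n \<and> z k < 2}"
  define U where "U = {y \<in> lev n (j+1). z < y}"
  have UKS: "U = f ` KS" unfolding U_def KS_def f_def using cover_char[OF assms(2)] by auto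
  have inj: "inj_on f KS"
  proof
    fix k k' assume kk: "k \<in> KS" "k' \<in> KS" "f k = f k'"
    show "k = k'"
    proof (rule ccontr)
      assume "k \<noteq> k'"
      then have "(f k) k = z k + 1" "(f k') k = z k" unfolding f_def by auto
      then show False using kk by simp
    qed
  qed
  have KSne: "KS \<noteq> {}"
  proof -
    have "\<not> (\<forall>k<n. z k = 2)"
    proof
      assume H: "\<forall>k<n. z k = 2"
      have "(\<Sum>k<n. z k) = 2*n" using H by simp
      then show False using assms unfolding lev_def by simp
    qed
    then obtain k where "k < n" "z k \<noteq> 2" by auto
    moreover have "z k \<le> 2" using assms \<open>k < n\<close> unfolding lev_def cube_def by auto
    ultimately show ?thesis unfolding KS_def by auto
  qed
  obtain y0 where "y0 \<in> U" using UKS KSne by auto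
  then have y0: "y0 \<in> lev n (j+1)" unfolding U_def by simp
  have Beq: "S.B = real (card (lev n (j+1)))" unfolding S.B_def using card_lev[of n "j+1"] by simp
  have Bpos: "S.B > 0" unfolding Beq using card_pos[OF y0 finite_lev] by simp
  have "(\<Sum>y\<in>lev n (j+1). trans_prob n j z y) = (\<Sum>y\<in>U. trans_prob n j z y)"
    by (rule sum.mono_neutral_right) (auto simp: U_def finite_lev trans_prob_def)
  also have "\<dots> = (\<Sum>k\<in>KS. trans_prob n j z (f k))"
    unfolding UKS by (rule sum.reindex[OF inj, unfolded comp_def])
  also have "\<dots> = (\<Sum>k\<in>KS. S.A * (if z k = 1 then wt n j s else wt' n j s))"
  proof (rule sum.cong)
    fix k assume k: "k \<in> KS"
    have "f k \<in> lev n (j+1) \<and> z < f k" using cover_char[OF assms(2)] k unfolding KS_def f_def by auto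
    moreover have "twos n (f k) = twos n z + (if z k = 1 then 1 else 0)" using twos_cover k unfolding KS_def f_def by auto
    ultimately show "trans_prob n j z (f k) = S.A * (if z k = 1 then wt n j s else wt' n j s)"
      unfolding trans_prob_def Aeq s_def using assms by auto
  qed simp
  also have "\<dots> = S.A * (wt n j s * real (card {k. k < n \<and> z k = 1}) + wt' n j s * real (card {k. k < n \<and> z k = 0}))"
  proof -
    have KS: "KS = {k. k < n \<and> z k = 1} \<union> {k. k < n \<and> z k = 0}" unfolding KS_def by auto
    have "(\<Sum>k\<in>KS. S.A * (if z k = 1 then wt n j s else wt' n j s))
       = (\<Sum>k\<in>{k. k < n \<and> z k = 1}. S.A * (if z k = 1 then wt n j s else wt' n j s))
         + (\<Sum>k\<in>{k. k < n \<and> z k = 0}. S.A * (if z k = 1 then wt n j s else wt' n j s))"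
      unfolding KS by (rule sum.union_disjoint) auto
    also have "\<dots> = (\<Sum>k\<in>{k. k < n \<and> z k = 1}. S.A * wt n j s) + (\<Sum>k\<in>{k. k < n \<and> z k = 0}. S.A * wt' n j s)"
      by (intro arg_cong2[where f="(+)"] sum.cong) auto
    also have "\<dots> = S.A * (wt n j s * real (card {k. k < n \<and> z k = 1}) + wt' n j s * real (card {k. k < n \<and> z k = 0}))"
      by (simp add: algebra_simps)
    finally show ?thesis .
  qed
  also have "\<dots> = 1"
    unfolding counts[OF assms(2)] s_def[symmetric] wt_eq[OF ij] wt'_eq[OF ij]
    using S.sum_one[OF as Apos Bpos] by simp
  finally show ?thesis .
qed




definition paths :: "nat \<Rightarrow> nat \<Rightarrow> nat \<Rightarrow> (nat \<Rightarrow> nat) list set" where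
  "paths n l k = {c. length c = Suc k \<and> (\<forall>j\<le>k. c!j \<in> lev n (l+j))}"

definition W :: "nat \<Rightarrow> nat \<Rightarrow> (nat \<Rightarrow> nat) list \<Rightarrow> real" where
  "W n l c = (\<Prod>j<length c - 1. trans_prob n (l+j) (c!j) (c!Suc j))"

lemma lev_sub_cube: "lev n j \<subseteq> cube n" unfolding lev_def by auto

lemma finite_paths: "finite (paths n l k)"
proof -
  have "paths n l k \<subseteq> {xs. set xs \<subseteq> cube n \<and> length xs = Suc k}"
  proof
    fix c assume c: "c \<in> paths n l k"
    have "set c \<subseteq> cube n"
    proof
      fix x assume "x \<in> set c"
      then obtain j where j: "j < length c" "c!j = x" by (auto simp: in_set_conv_nth)
      then have "j \<le> k" using c unfolding paths_def by simp
      then have "c!j \<in> lev n (l+j)" using c unfolding paths_def by blast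
      then show "x \<in> cube n" using j lev_sub_cube by blast
    qed
    then show "c \<in> {xs. set xs \<subseteq> cube n \<and> length xs = Suc k}" using c unfolding paths_def by simp
  qed
  moreover have "finite {xs. set xs \<subseteq> cube n \<and> length xs = Suc k}"
    using finite_lists_length_eq[OF finite_cube] by simp
  ultimately show ?thesis by (rule finite_subset)
qed

lemma paths_Suc: "paths n l (Suc k) = (\<lambda>(y, q). y # q) ` (lev n l \<times> paths n (Suc l) k)"
proof (rule set_eqI)
  fix c
  show "c \<in> paths n l (Suc k) \<longleftrightarrow> c \<in> (\<lambda>(y, q). y # q) ` (lev n l \<times> paths n (Suc l) k)"
  proof
    assume c: "c \<in> paths n l (Suc k)"
    then obtain y q where cq: "c = y # q" unfolding paths_def by (cases c) auto
    have "y \<in> lev n l" using c cq unfolding paths_def by force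
    moreover have "q \<in> paths n (Suc l) k"
      unfolding paths_def
    proof (intro CollectI conjI allI impI)
      show "length q = Suc k" using c cq unfolding paths_def by simp
      fix j assume "j \<le> k"
      then have "Suc j \<le> Suc k" by simp
      then have "c ! Suc j \<in> lev n (l + Suc j)" using c unfolding paths_def by blast
      then show "q ! j \<in> lev n (Suc l + j)" using cq by simp
    qed
    ultimately show "c \<in> (\<lambda>(y, q). y # q) ` (lev n l \<times> paths n (Suc l) k)" using cq by force
  next
    assume "c \<in> (\<lambda>(y, q). y # q) ` (lev n l \<times> paths n (Suc l) k)"
    then obtain y q where yq: "c = y # q" "y \<in> lev n l" "q \<in> paths n (Suc l) k" by auto
    show "c \<in> paths n l (Suc k)"
      unfolding paths_def
    proof (intro CollectI conjI allI impI)
      show "length c = Suc (Suc k)" using yq unfolding paths_def by simp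
      fix j assume j: "j \<le> Suc k"
      show "c ! j \<in> lev n (l + j)"
      proof (cases j)
        case 0 then show ?thesis using yq by simp
      next
        case (Suc j') then show ?thesis using yq j unfolding paths_def by simp
      qed
    qed
  qed
qed

lemma paths_0: "paths n l 0 = (\<lambda>y. [y]) ` lev n l"
proof (rule set_eqI)
  fix c
  show "c \<in> paths n l 0 \<longleftrightarrow> c \<in> (\<lambda>y. [y]) ` lev n l"
  proof
    assume "c \<in> paths n l 0"
    then obtain y where "c = [y]" "y \<in> lev n l" unfolding paths_def
      by (cases c) auto
    then show "c \<in> (\<lambda>y. [y]) ` lev n l" by auto
  qed (auto simp: paths_def)
qed

lemma sum_paths_Suc:
  "(\<Sum>c\<in>paths n l (Suc k). g c) = (\<Sum>y\<in>lev n l. \<Sum>q\<in>paths n (Suc l) k. g (y # q))"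
proof -
  have inj: "inj_on (\<lambda>(y, q). y # q) (lev n l \<times> paths n (Suc l) k)" by (auto simp: inj_on_def)
  have "(\<Sum>c\<in>paths n l (Suc k). g c) = (\<Sum>p\<in>lev n l \<times> paths n (Suc l) k. g ((\<lambda>(y, q). y # q) p))"
    unfolding paths_Suc by (rule sum.reindex[OF inj, unfolded comp_def])
  also have "\<dots> = (\<Sum>(y,q)\<in>lev n l \<times> paths n (Suc l) k. g (y # q))"
    by (simp add: case_prod_unfold)
  also have "\<dots> = (\<Sum>y\<in>lev n l. \<Sum>q\<in>paths n (Suc l) k. g (y # q))"
    by (rule sum.cartesian_product[symmetric])
  finally show ?thesis .
qed

lemma W_Cons: assumes "q \<in> paths n (Suc l) k" shows "W n l (y # q) = trans_prob n l y (q!0) * W n (Suc l) q"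
proof -
  have lq: "length q = Suc k" using assms unfolding paths_def by simp
  have "W n l (y # q) = (\<Prod>j<Suc k. trans_prob n (l+j) ((y#q)!j) ((y#q)!Suc j))" unfolding W_def using lq by simp
  also have "\<dots> = trans_prob n l y (q!0) * (\<Prod>j<k. trans_prob n (l + Suc j) ((y#q)!Suc j) ((y#q)!Suc (Suc j)))"
    by (subst prod.lessThan_Suc_shift) simp
  also have "\<dots> = trans_prob n l y (q!0) * W n (Suc l) q" unfolding W_def using lq by simp
  finally show ?thesis .
qed

lemma swap_lemma:
  fixes \<phi> :: "'a \<Rightarrow> real"
  assumes "finite A" "finite Q"
  shows "(\<Sum>z\<in>A. \<Sum>q\<in>Q. \<phi> z * (if P q then t z q * w q else 0)) = (\<Sum>q\<in>Q. (\<Sum>z\<in>A. \<phi> z * t z q) * (if P q then w q else 0))"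
proof -
  have "(\<Sum>z\<in>A. \<Sum>q\<in>Q. \<phi> z * (if P q then t z q * w q else 0)) = (\<Sum>q\<in>Q. \<Sum>z\<in>A. \<phi> z * (if P q then t z q * w q else 0))"
    by (rule sum.swap)
  also have "\<dots> = (\<Sum>q\<in>Q. (\<Sum>z\<in>A. \<phi> z * t z q) * (if P q then w q else 0))"
  proof (rule sum.cong)
    fix q assume "q \<in> Q"
    show "(\<Sum>z\<in>A. \<phi> z * (if P q then t z q * w q else 0)) = (\<Sum>z\<in>A. \<phi> z * t z q) * (if P q then w q else 0)"
      by (cases "P q") (simp_all add: sum_distrib_right mult.assoc)
  qed simp
  finally show ?thesis .
qed

lemma first_step:
  assumes "q \<in> paths n (Suc l) k"
  shows "q!0 \<in> lev n (Suc l)"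
  using assms unfolding paths_def by force

lemma W_single: "W n l [x] = 1" by (simp add: W_def)

lemma suffix_sum:
  assumes "y \<in> lev n l" "l + k \<le> 2*n"
  shows "(\<Sum>c\<in>paths n l k. if c!0 = y then W n l c else 0) = 1"
  using assms
proof (induction k arbitrary: l y)
  case 0
  have "(\<Sum>c\<in>paths n l 0. if c!0 = y then W n l c else 0) = (\<Sum>y'\<in>lev n l. if y' = y then W n l [y'] else 0)"
    unfolding paths_0 by (subst sum.reindex) (auto simp: inj_on_def)
  also have "\<dots> = (\<Sum>y'\<in>lev n l. if y' = y then 1 else 0)"
    by (rule sum.cong) (auto simp: W_single)
  also have "\<dots> = 1" using 0 finite_lev by simp
  finally show ?case .
next
  case (Suc k)
  have lt: "l < 2*n" using Suc by simp
  have IH: "(\<Sum>q\<in>paths n (Suc l) k. if q!0 = y' then W n (Suc l) q else 0) = 1" if "y' \<in> lev n (Suc l)" for y'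
    using Suc.IH[of y' "Suc l"] that Suc by simp
  have "(\<Sum>c\<in>paths n l (Suc k). if c!0 = y then W n l c else 0)
      = (\<Sum>y'\<in>lev n l. \<Sum>q\<in>paths n (Suc l) k. if y' = y then trans_prob n l y' (q!0) * W n (Suc l) q else 0)"
    unfolding sum_paths_Suc by (intro sum.cong refl) (simp add: W_Cons)
  also have "\<dots> = (\<Sum>y'\<in>lev n l. if y' = y then (\<Sum>q\<in>paths n (Suc l) k. trans_prob n l y (q!0) * W n (Suc l) q) else 0)"
    by (rule sum.cong) auto
  also have "\<dots> = (\<Sum>q\<in>paths n (Suc l) k. trans_prob n l y (q!0) * W n (Suc l) q)"
    using Suc.prems finite_lev by simp
  also have "\<dots> = (\<Sum>q\<in>paths n (Suc l) k. \<Sum>y''\<in>lev n (Suc l). if q!0 = y'' then trans_prob n l y y'' * W n (Suc l) q else 0)"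
    by (rule sum.cong) (auto simp: first_step finite_lev)
  also have "\<dots> = (\<Sum>y''\<in>lev n (Suc l). trans_prob n l y y'' * (\<Sum>q\<in>paths n (Suc l) k. if q!0 = y'' then W n (Suc l) q else 0))"
    by (subst sum.swap) (auto simp: sum_distrib_left intro!: sum.cong)
  also have "\<dots> = (\<Sum>y''\<in>lev n (Suc l). trans_prob n l y y'')"
    using IH by simp
  also have "\<dots> = 1" using sum_trans[OF lt Suc.prems(1)] by simp
  finally show ?case .
qed


lemma first_sum:
  assumes "x \<in> lev n l" "l + Suc k \<le> 2*n"
  shows "(\<Sum>q\<in>paths n (Suc l) k. trans_prob n l x (q!0) * W n (Suc l) q) = 1"
proof -
  have lt: "l < 2*n" using assms by simp
  have "(\<Sum>q\<in>paths n (Suc l) k. trans_prob n l x (q!0) * W n (Suc l) q)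
      = (\<Sum>q\<in>paths n (Suc l) k. \<Sum>y''\<in>lev n (Suc l). if q!0 = y'' then trans_prob n l x y'' * W n (Suc l) q else 0)"
    by (rule sum.cong) (auto simp: first_step finite_lev)
  also have "\<dots> = (\<Sum>y''\<in>lev n (Suc l). trans_prob n l x y'' * (\<Sum>q\<in>paths n (Suc l) k. if q!0 = y'' then W n (Suc l) q else 0))"
    by (subst sum.swap) (auto simp: sum_distrib_left intro!: sum.cong)
  also have "\<dots> = (\<Sum>y''\<in>lev n (Suc l). trans_prob n l x y'')"
    using suffix_sum[of _ n "Suc l" k] assms by simp
  also have "\<dots> = 1" using sum_trans[OF lt assms(1)] by simp
  finally show ?thesis .
qed

lemma fixed_next:
  assumes "l + Suc k \<le> 2*n"
  shows "(\<Sum>q\<in>paths n (Suc l) k. if q!0 = y then trans_prob n l x (q!0) * W n (Suc l) q else 0) = trans_prob n l x y"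
proof (cases "y \<in> lev n (Suc l)")
  case True
  have "(\<Sum>q\<in>paths n (Suc l) k. if q!0 = y then trans_prob n l x (q!0) * W n (Suc l) q else 0)
      = trans_prob n l x y * (\<Sum>q\<in>paths n (Suc l) k. if q!0 = y then W n (Suc l) q else 0)"
    by (auto simp: sum_distrib_left intro!: sum.cong)
  also have "\<dots> = trans_prob n l x y" using suffix_sum[OF True] assms by simp
  finally show ?thesis .
next
  case False
  then have "\<And>q. q \<in> paths n (Suc l) k \<Longrightarrow> q!0 \<noteq> y" using first_step by blast
  moreover have "trans_prob n l x y = 0" using False unfolding trans_prob_def by simp
  ultimately show ?thesis by simp
qed

lemma forward:
  assumes "i < k" "l + k \<le> 2*n" "x \<in> lev n (l+i)"
  shows "(\<Sum>c\<in>paths n l k. \<phi> (c!0) * (if c!i = x \<and> c!(Suc i) = y then W n l c else 0))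
       = trans_prob n (l+i) x y * (\<Sum>c\<in>paths n l k. \<phi> (c!0) * (if c!i = x then W n l c else 0))"
  using assms
proof (induction i arbitrary: l k \<phi>)
  case 0
  then obtain k' where k': "k = Suc k'" by (cases k) auto
  have x: "x \<in> lev n l" using 0 by simp
  have "(\<Sum>c\<in>paths n l k. \<phi> (c!0) * (if c!0 = x \<and> c!(Suc 0) = y then W n l c else 0))
     = (\<Sum>z\<in>lev n l. if z = x then \<phi> x * (\<Sum>q\<in>paths n (Suc l) k'. if q!0 = y then trans_prob n l x (q!0) * W n (Suc l) q else 0) else 0)"
    unfolding k' sum_paths_Suc
    by (intro sum.cong refl) (auto simp: W_Cons sum_distrib_left intro!: sum.cong)
  also have "\<dots> = \<phi> x * trans_prob n l x y" using x fixed_next[of l k' n y x] 0 k' finite_lev by simp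
  finally have L: "(\<Sum>c\<in>paths n l k. \<phi> (c!0) * (if c!0 = x \<and> c!(Suc 0) = y then W n l c else 0)) = \<phi> x * trans_prob n l x y" .
  have "(\<Sum>c\<in>paths n l k. \<phi> (c!0) * (if c!0 = x then W n l c else 0))
     = (\<Sum>z\<in>lev n l. if z = x then \<phi> x * (\<Sum>q\<in>paths n (Suc l) k'. trans_prob n l x (q!0) * W n (Suc l) q) else 0)"
    unfolding k' sum_paths_Suc
    by (intro sum.cong refl) (auto simp: W_Cons sum_distrib_left intro!: sum.cong)
  also have "\<dots> = \<phi> x" using x first_sum[of x n l k'] 0 k' finite_lev by simp
  finally have R: "(\<Sum>c\<in>paths n l k. \<phi> (c!0) * (if c!0 = x then W n l c else 0)) = \<phi> x" .
  show ?case using L R by simp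
next
  case (Suc i)
  then obtain k' where k': "k = Suc k'" by (cases k) auto
  define \<psi> where "\<psi> w = (\<Sum>z\<in>lev n l. \<phi> z * trans_prob n l z w)" for w
  have IH: "(\<Sum>q\<in>paths n (Suc l) k'. \<psi> (q!0) * (if q!i = x \<and> q!(Suc i) = y then W n (Suc l) q else 0))
       = trans_prob n (Suc l + i) x y * (\<Sum>q\<in>paths n (Suc l) k'. \<psi> (q!0) * (if q!i = x then W n (Suc l) q else 0))"
    using Suc.IH[of k' "Suc l" \<psi>] Suc.prems k' by simp
  have "(\<Sum>c\<in>paths n l k. \<phi> (c!0) * (if c!(Suc i) = x \<and> c!(Suc (Suc i)) = y then W n l c else 0))
      = (\<Sum>z\<in>lev n l. \<Sum>q\<in>paths n (Suc l) k'. \<phi> z * (if q!i = x \<and> q!(Suc i) = y then trans_prob n l z (q!0) * W n (Suc l) q else 0))"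
    unfolding k' sum_paths_Suc by (intro sum.cong refl) (auto simp: W_Cons)
  also have "\<dots> = (\<Sum>q\<in>paths n (Suc l) k'. \<psi> (q!0) * (if q!i = x \<and> q!(Suc i) = y then W n (Suc l) q else 0))"
    unfolding \<psi>_def by (rule swap_lemma) (simp_all add: finite_lev finite_paths)
  also have "\<dots> = trans_prob n (Suc l + i) x y * (\<Sum>q\<in>paths n (Suc l) k'. \<psi> (q!0) * (if q!i = x then W n (Suc l) q else 0))"
    by (rule IH)
  also have "(\<Sum>q\<in>paths n (Suc l) k'. \<psi> (q!0) * (if q!i = x then W n (Suc l) q else 0))
      = (\<Sum>z\<in>lev n l. \<Sum>q\<in>paths n (Suc l) k'. \<phi> z * (if q!i = x then trans_prob n l z (q!0) * W n (Suc l) q else 0))"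
    unfolding \<psi>_def by (rule swap_lemma[symmetric]) (simp_all add: finite_lev finite_paths)
  also have "\<dots> = (\<Sum>c\<in>paths n l k. \<phi> (c!0) * (if c!(Suc i) = x then W n l c else 0))"
    unfolding k' sum_paths_Suc by (intro sum.cong refl) (auto simp: W_Cons)
  finally show ?case by simp
qed




lemma mc_sub: "max_chains n \<subseteq> paths n 0 (2*n)"
  unfolding max_chains_def paths_def by auto

lemma mu_chain_W: "c \<in> max_chains n \<Longrightarrow> mu_chain n c = W n 0 c"
  unfolding max_chains_def mu_chain_def W_def by simp

lemma W_zero: assumes "c \<in> paths n 0 (2*n)" "c \<notin> max_chains n" shows "W n 0 c = 0"
proof -
  have lc: "length c = Suc (2*n)" using assms unfolding paths_def by simp
  obtain j where j: "j < 2*n" "\<not> c!j < c!(j+1)" using assms unfolding max_chains_def paths_def by auto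
  have "trans_prob n (0+j) (c!j) (c!Suc j) = 0" using j unfolding trans_prob_def by simp
  then show ?thesis unfolding W_def using lc j by (auto intro!: prod_zero)
qed

lemma mu_prob_paths: "mu_prob n P = (\<Sum>c\<in>paths n 0 (2*n). if P c then W n 0 c else 0)"
proof -
  have "mu_prob n P = (\<Sum>c\<in>{c \<in> max_chains n. P c}. W n 0 c)"
    unfolding mu_prob_def by (rule sum.cong) (auto simp: mu_chain_W)
  also have "\<dots> = (\<Sum>c\<in>{c \<in> paths n 0 (2*n). P c}. W n 0 c)"
  proof (rule sum.mono_neutral_left)
    show "finite {c \<in> paths n 0 (2*n). P c}" using finite_paths by simp
    show "{c \<in> max_chains n. P c} \<subseteq> {c \<in> paths n 0 (2*n). P c}" using mc_sub by auto
    show "\<forall>c\<in>{c \<in> paths n 0 (2*n). P c} - {c \<in> max_chains n. P c}. W n 0 c = 0"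
      using W_zero by auto
  qed
  also have "\<dots> = (\<Sum>c\<in>paths n 0 (2*n). if P c then W n 0 c else 0)"
    by (simp add: sum.inter_filter finite_paths)
  finally show ?thesis .
qed

lemma lev_unique: "x \<in> lev n j \<Longrightarrow> x \<in> lev n j' \<Longrightarrow> j = j'"
  unfolding lev_def by auto

lemma in_path: assumes "c \<in> paths n 0 (2*n)" "x \<in> lev n i" "i \<le> 2*n"
  shows "x \<in> set c \<longleftrightarrow> c!i = x"
proof
  assume "x \<in> set c"
  then obtain j where j: "j < length c" "c!j = x" by (auto simp: in_set_conv_nth)
  then have "c!j \<in> lev n j" using assms unfolding paths_def by auto
  then have "j = i" using lev_unique assms j by metis
  then show "c!i = x" using j by simp
next
  assume "c!i = x"
  moreover have "i < length c" using assms unfolding paths_def by simp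
  ultimately show "x \<in> set c" by auto
qed

theorem mainTheorem12:
  fixes n i :: nat and x y :: "nat \<Rightarrow> nat"
  assumes "n \<ge> 5" and "i \<le> 2 * n - 1"
    and "x \<in> lev n i" and "y \<in> lev n (i + 1)" and "x < y"
  shows "mu_cond n y x \<le>
           (if i \<le> n - 1
            then 2 * real (card (lev n i)) / (real (i + 1) * real (card (lev n (i + 1))))
            else 2 / (2 * real n - real i))"
proof -
  have i2: "i < 2*n" using assms by simp
  define D where "D = (\<Sum>c\<in>paths n 0 (2*n). (\<lambda>_. 1::real) (c!0) * (if c!i = x then W n 0 c else 0))"
  have den: "mu_prob n (\<lambda>c. x \<in> set c) = D"
    unfolding mu_prob_paths D_def
    by (rule sum.cong) (use in_path[OF _ assms(3)] i2 in auto)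
  have "mu_prob n (\<lambda>c. y \<in> set c \<and> x \<in> set c)
      = (\<Sum>c\<in>paths n 0 (2*n). (\<lambda>_. 1::real) (c!0) * (if c!i = x \<and> c!(Suc i) = y then W n 0 c else 0))"
    unfolding mu_prob_paths
    by (rule sum.cong) (use in_path[OF _ assms(3)] in_path[OF _ assms(4)] i2 in auto)
  also have "\<dots> = trans_prob n i x y * D"
    unfolding D_def using forward[of i "2*n" 0 n x "\<lambda>_. 1" y] i2 assms by simp
  finally have num: "mu_prob n (\<lambda>c. y \<in> set c \<and> x \<in> set c) = trans_prob n i x y * D" .
  have cond: "mu_cond n y x = (if D = 0 then 0 else trans_prob n i x y)"
    unfolding mu_cond_def num den by simp
  have tb: "trans_prob n i x y \<le> (if i \<le> n - 1
            then 2 * real (card (lev n i)) / (real (i + 1) * real (card (lev n (i + 1))))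
            else 2 / (2 * real n - real i))"
    by (rule trans_bound) (use assms in auto)
  have nn: "0 \<le> (if i \<le> n - 1
            then 2 * real (card (lev n i)) / (real (i + 1) * real (card (lev n (i + 1))))
            else 2 / (2 * real n - real i))"
    using assms by auto
  show ?thesis
  proof (cases "D = 0")
    case True then show ?thesis using cond nn by simp
  next
    case False then show ?thesis using cond tb by simp
  qed
qed



end
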